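(* Let $X$ be a compact metric space, $T:X\to X$ continuous, and $\mu$ a $T$-invariant ergodic Borel probability measure on $X$. Let $\alpha=\{A_1,\dots,A_m\}$ be a finite measurable partition of $X$ and let $Z$ be a coarsely optimal compression algorithm. Then for $\mu$-almost every $x\in X$, \[ K_Z(x,\alpha)=h_\mu(T,\alpha), \] where $h_\mu(T,\alpha)$ is the metric (Kolmogorov–Sinai) entropy of $T$ with respect to the partition $\alpha$.
   Context: All logarithms and entropies are in base 2. For a finite measurable partition $\alpha=\{A_1,\dots,A_m\}$ of $X$, the symbolic orbit of $x\in X$ is $\Phi_\alpha(x)=\omega\in\{1,\dots,m\}^{\mathbb{N}}$ defined by $T^j(x)\in A_{\omega_j}$ for all $j$. For $\omega$ an infinite string, $\omega^n$ denotes its first $n$ symbols. A compression algorithm is a total recursive injective (lossless) map $Z$ from finite strings over the alphabet $\{1,\dots,m\}$ to finite binary strings; $K_Z(\omega)=\limsup_{n\to\infty}|Z(\omega^n)|/n$ and $K_Z(x,\alpha)=K_Z(\Phi_\alpha(x))$. Empirical entropy: for a string $s$ of length $n$ and word $w$ of length $l\le n$, $P(s,w)=\frac{1}{n-l+1}\#\{0\le i\le n-l: (s_{i+1},\dots,s_{i+l})=w\}$, $\hat H_l(s)=-\frac1l\sum_{w}P(s,w)\log P(s,w)$ (sum over all words of length $l$, $0\log0=0$). $Z$ is coarsely optimal if for every $k\ge1$ there is $f_k$ with $f_k(n)=o(n)$ such that $|Z(s)|\le|s|\hat H_k(s)+f_k(|s|)$ for every finite string $s$. *)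

theory Defs
  imports "HOL-Probability.Probability" "HOL-Library.Landau_Symbols"
begin

(* Finite strings over the alphabet {1..m} are lists of naturals with entries in {1..m};
   infinite strings are functions nat => nat; binary strings are bool lists. *)

definition strings_over :: "nat \<Rightarrow> nat list set" where
  "strings_over m = {s. set s \<subseteq> {1..m}}"

definition prefix_of :: "(nat \<Rightarrow> nat) \<Rightarrow> nat \<Rightarrow> nat list" where
  "prefix_of \<omega> n = map \<omega> [0..<n]"

definition invariant_measure :: "'a measure \<Rightarrow> ('a \<Rightarrow> 'a) \<Rightarrow> bool" where
  "invariant_measure M T \<longleftrightarrow> T \<in> M \<rightarrow>\<^sub>M M \<and>
     (\<forall>A\<in>sets M. emeasure M (T -` A \<inter> space M) = emeasure M A)"

definition ergodic :: "'a measure \<Rightarrow> ('a \<Rightarrow> 'a) \<Rightarrow> bool" where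
  "ergodic M T \<longleftrightarrow> (\<forall>A\<in>sets M. T -` A \<inter> space M = A \<longrightarrow>
      measure M A = 0 \<or> measure M A = 1)"

definition measurable_partition :: "'a measure \<Rightarrow> nat \<Rightarrow> (nat \<Rightarrow> 'a set) \<Rightarrow> bool" where
  "measurable_partition M m A \<longleftrightarrow> (\<forall>i\<in>{1..m}. A i \<in> sets M) \<and>
      disjoint_family_on A {1..m} \<and> (\<Union>i\<in>{1..m}. A i) = space M"

definition sym_orbit :: "nat \<Rightarrow> (nat \<Rightarrow> 'a set) \<Rightarrow> ('a \<Rightarrow> 'a) \<Rightarrow> 'a \<Rightarrow> nat \<Rightarrow> nat" where
  "sym_orbit m A T x j = (THE i. i \<in> {1..m} \<and> (T ^^ j) x \<in> A i)"

definition K_Z :: "(nat list \<Rightarrow> bool list) \<Rightarrow> (nat \<Rightarrow> nat) \<Rightarrow> ereal" where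
  "K_Z Z \<omega> = limsup (\<lambda>n. ereal (real (length (Z (prefix_of \<omega> n))) / real n))"

definition K_Z_point :: "(nat list \<Rightarrow> bool list) \<Rightarrow> nat \<Rightarrow> (nat \<Rightarrow> 'a set) \<Rightarrow> ('a \<Rightarrow> 'a) \<Rightarrow> 'a \<Rightarrow> ereal" where
  "K_Z_point Z m A T x = K_Z Z (sym_orbit m A T x)"

definition emp_freq :: "nat list \<Rightarrow> nat list \<Rightarrow> real" where
  "emp_freq s w = real (card {i. i \<le> length s - length w \<and> take (length w) (drop i s) = w})
                  / real (length s - length w + 1)"

(* empirical entropy hat H_l(s), sum over all words of length l over {1..m} (0 log 0 = 0) *)
definition emp_entropy :: "nat \<Rightarrow> nat \<Rightarrow> nat list \<Rightarrow> real" where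
  "emp_entropy m l s = - (1 / real l) *
     (\<Sum>w\<in>{w. w \<in> strings_over m \<and> length w = l}. emp_freq s w * log 2 (emp_freq s w))"

(* lossless compression algorithm on strings over {1..m} (recursiveness not modelled) *)
definition compression_algorithm :: "nat \<Rightarrow> (nat list \<Rightarrow> bool list) \<Rightarrow> bool" where
  "compression_algorithm m Z \<longleftrightarrow> inj_on Z (strings_over m)"

definition coarsely_optimal :: "nat \<Rightarrow> (nat list \<Rightarrow> bool list) \<Rightarrow> bool" where
  "coarsely_optimal m Z \<longleftrightarrow> (\<forall>k\<ge>1. \<exists>f :: nat \<Rightarrow> real. f \<in> o(\<lambda>n. real n) \<and>
      (\<forall>s\<in>strings_over m. real (length (Z s)) \<le> real (length s) * emp_entropy m k s + f (length s)))"

(* cylinder of the join alpha v T^-1 alpha v ... v T^-(n-1) alpha indexed by word w *)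
definition cylinder :: "(nat \<Rightarrow> 'a set) \<Rightarrow> ('a \<Rightarrow> 'a) \<Rightarrow> nat list \<Rightarrow> 'a set" where
  "cylinder A T w = {x. \<forall>j<length w. (T ^^ j) x \<in> A (w ! j)}"

(* H_mu of the n-fold join, base 2, 0 log 0 = 0 *)
definition join_entropy :: "'a measure \<Rightarrow> nat \<Rightarrow> (nat \<Rightarrow> 'a set) \<Rightarrow> ('a \<Rightarrow> 'a) \<Rightarrow> nat \<Rightarrow> real" where
  "join_entropy M m A T n = - (\<Sum>w\<in>{w. w \<in> strings_over m \<and> length w = n}.
      measure M (cylinder A T w \<inter> space M) * log 2 (measure M (cylinder A T w \<inter> space M)))"

definition metric_entropy :: "'a measure \<Rightarrow> nat \<Rightarrow> (nat \<Rightarrow> 'a set) \<Rightarrow> ('a \<Rightarrow> 'a) \<Rightarrow> real" where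
  "metric_entropy M m A T = lim (\<lambda>n. join_entropy M m A T n / real n)"

end

theory Submission
  imports Defs "HOL-Real_Asymp.Real_Asymp"
begin

lemma funpow_measurable: "T \<in> M \<rightarrow>\<^sub>M M \<Longrightarrow> (T ^^ n) \<in> M \<rightarrow>\<^sub>M M"
  by (induction n) (auto intro: measurable_comp)

locale ES =
  fixes M :: "'a measure" and T :: "'a \<Rightarrow> 'a" and m :: nat and A :: "nat \<Rightarrow> 'a set"
  assumes PS: "prob_space M" and SP: "space M = UNIV"
    and INV: "invariant_measure M T" and ERG: "ergodic M T"
    and PART: "measurable_partition M m A"
begin

interpretation prob_space M by (rule PS)

definition words :: "nat \<Rightarrow> nat list set" where
  "words n = {w. w \<in> strings_over m \<and> length w = n}"

abbreviation om where "om x \<equiv> sym_orbit m A T x"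
abbreviation C where "C w \<equiv> cylinder A T w"
definition p where "p w = measure M (C w)"

lemma Tmeas[measurable]: "T \<in> M \<rightarrow>\<^sub>M M" using INV by (simp add: invariant_measure_def)
lemma Tn_meas[measurable]: "(T ^^ n) \<in> M \<rightarrow>\<^sub>M M" by (rule funpow_measurable[OF Tmeas])

lemma A_meas: "i \<in> {1..m} \<Longrightarrow> A i \<in> sets M"
  using PART by (simp add: measurable_partition_def)

lemma part_ex: "\<exists>i\<in>{1..m}. y \<in> A i"
  using PART SP by (auto simp: measurable_partition_def)

lemma part_uniq: "i \<in> {1..m} \<Longrightarrow> j \<in> {1..m} \<Longrightarrow> y \<in> A i \<Longrightarrow> y \<in> A j \<Longrightarrow> i = j"
  using PART unfolding measurable_partition_def disjoint_family_on_def by blast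

lemma m_pos: "m \<ge> 1" using part_ex[of undefined] by auto

lemma om_prop: "om x j \<in> {1..m} \<and> (T ^^ j) x \<in> A (om x j)"
proof -
  obtain i where i: "i \<in> {1..m}" "(T ^^ j) x \<in> A i" using part_ex by blast
  have "(THE i. i \<in> {1..m} \<and> (T ^^ j) x \<in> A i) = i"
    by (rule the_equality) (use i part_uniq in blast)+
  then show ?thesis using i by (simp add: sym_orbit_def)
qed

lemma om_eq: "i \<in> {1..m} \<Longrightarrow> (T ^^ j) x \<in> A i \<Longrightarrow> om x j = i"
  using om_prop part_uniq by blast

lemma prefix_words: "prefix_of (om x) n \<in> words n"
  using om_prop by (auto simp: words_def strings_over_def prefix_of_def)

lemma C_iff: "w \<in> words n \<Longrightarrow> x \<in> C w \<longleftrightarrow> prefix_of (om x) n = w"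
proof
  assume w: "w \<in> words n" and x: "x \<in> C w"
  show "prefix_of (om x) n = w"
  proof (rule nth_equalityI)
    show "length (prefix_of (om x) n) = length w" using w by (simp add: words_def prefix_of_def)
    fix j assume "j < length (prefix_of (om x) n)"
    then have j: "j < n" by (simp add: prefix_of_def)
    have "w ! j \<in> set w" using w j by (simp add: words_def)
    then have "w ! j \<in> {1..m}" using w unfolding words_def strings_over_def by blast
    moreover have "(T ^^ j) x \<in> A (w ! j)" using x j w by (simp add: cylinder_def words_def)
    ultimately show "prefix_of (om x) n ! j = w ! j" using j om_eq by (simp add: prefix_of_def)
  qed
next
  assume w: "w \<in> words n" and "prefix_of (om x) n = w"
  then show "x \<in> C w" using om_prop by (auto simp: cylinder_def prefix_of_def words_def)
qed

lemma finite_words: "finite (words n)"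
proof -
  have "words n \<subseteq> {w. set w \<subseteq> {1..m} \<and> length w = n}" by (auto simp: words_def strings_over_def)
  moreover have "finite {w. set w \<subseteq> {1..m} \<and> length w = n}"
    by (rule finite_lists_length_eq) simp
  ultimately show ?thesis by (rule finite_subset)
qed

lemma C_meas: "w \<in> strings_over m \<Longrightarrow> C w \<in> sets M"
proof -
  assume w: "w \<in> strings_over m"
  have "C w = (\<Inter>j<length w. (T ^^ j) -` A (w ! j) \<inter> space M)"
    using SP by (auto simp: cylinder_def)
  also have "\<dots> \<in> sets M"
  proof (cases "length w = 0")
    case True then show ?thesis using SP sets.top[of M] by simp
  next
    case False
    have "\<And>j. j < length w \<Longrightarrow> (T ^^ j) -` A (w ! j) \<inter> space M \<in> sets M"
    proof (intro measurable_sets[OF Tn_meas] A_meas)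
      fix j assume "j < length w"
      then have "w ! j \<in> set w" by simp
      then show "w ! j \<in> {1..m}" using w unfolding strings_over_def by blast
    qed
    then show ?thesis using False by (intro sets.finite_INT) auto
  qed
  finally show ?thesis .
qed

lemma words_C_meas: "w \<in> words n \<Longrightarrow> C w \<in> sets M"
  by (simp add: words_def C_meas)

lemma pref_set: "{x. P (prefix_of (om x) n)} = (\<Union>w\<in>{w\<in>words n. P w}. C w)"
proof (intro set_eqI iffI)
  fix x assume "x \<in> {x. P (prefix_of (om x) n)}"
  then show "x \<in> (\<Union>w\<in>{w\<in>words n. P w}. C w)"
    using C_iff[OF prefix_words[of x n], of x] prefix_words[of x n] by blast
next
  fix x assume "x \<in> (\<Union>w\<in>{w\<in>words n. P w}. C w)"
  then obtain w where "w \<in> words n" "P w" "x \<in> C w" by blast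
  then show "x \<in> {x. P (prefix_of (om x) n)}" using C_iff by auto
qed

lemma pref_set_meas: "{x. P (prefix_of (om x) n)} \<in> sets M"
  unfolding pref_set by (intro sets.finite_UN) (auto simp: finite_words words_C_meas)

lemma ind_sum_one: "(\<Sum>w\<in>words n. indicator (C w) x) = (1::real)"
proof -
  have "(\<Sum>w\<in>words n. indicator (C w) x) = (\<Sum>w\<in>words n. if w = prefix_of (om x) n then 1 else (0::real))"
    by (intro sum.cong refl) (auto simp: C_iff)
  also have "\<dots> = 1" using prefix_words finite_words by simp
  finally show ?thesis .
qed

lemma p_nonneg: "p w \<ge> 0" by (simp add: p_def)
lemma p_le1: "p w \<le> 1" by (simp add: p_def)

lemma p_sum: "(\<Sum>w\<in>words n. p w) = 1"
proof -
  have "(\<Sum>w\<in>words n. p w) = (\<Sum>w\<in>words n. integral\<^sup>L M (indicator (C w)))"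
    using SP by (simp add: p_def)
  also have "\<dots> = integral\<^sup>L M (\<lambda>x. \<Sum>w\<in>words n. indicator (C w) x)"
    by (rule Bochner_Integration.integral_sum[symmetric]) (auto simp: finite_words emeasure_eq_measure words_C_meas intro!: integrable_real_indicator)
  also have "\<dots> = 1" by (simp add: ind_sum_one prob_space)
  finally show ?thesis .
qed

lemma inv_pre: "S \<in> sets M \<Longrightarrow> measure M ((T ^^ n) -` S) = measure M S"
proof (induction n arbitrary: S)
  case 0 then show ?case by simp
next
  case (Suc n)
  have "(T ^^ Suc n) -` S = T -` ((T ^^ n) -` S)" by (auto simp: funpow_swap1)
  moreover have "(T ^^ n) -` S \<in> sets M" using Suc.prems measurable_sets[OF Tn_meas, of S n] SP by simp
  moreover have inv1: "measure M (T -` B) = measure M B" if "B \<in> sets M" for B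
    using INV that SP by (simp add: invariant_measure_def measure_def)
  ultimately have "measure M ((T ^^ Suc n) -` S) = measure M (T -` ((T ^^ n) -` S))" by (simp only:)
  also have "\<dots> = measure M ((T ^^ n) -` S)" by (rule inv1) (use \<open>(T ^^ n) -` S \<in> sets M\<close> in simp)
  also have "\<dots> = measure M S" using Suc by simp
  finally show ?case .
qed

lemma C_append: "C (u @ v) = C u \<inter> (T ^^ length u) -` C v"
proof -
  { fix x
    have "x \<in> C (u @ v) \<longleftrightarrow> (\<forall>j<length u + length v. (T ^^ j) x \<in> A ((u @ v) ! j))"
      by (simp add: cylinder_def)
    also have "\<dots> \<longleftrightarrow> (\<forall>j<length u. (T ^^ j) x \<in> A (u ! j)) \<and>
        (\<forall>j<length v. (T ^^ (length u + j)) x \<in> A (v ! j))"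
    proof (intro iffI conjI allI impI)
      fix j assume H: "\<forall>j<length u + length v. (T ^^ j) x \<in> A ((u @ v) ! j)" and j: "j < length u"
      have "(T ^^ j) x \<in> A ((u @ v) ! j)" using H j by simp
      then show "(T ^^ j) x \<in> A (u ! j)" using j by (simp add: nth_append_left)
    next
      fix j assume H: "\<forall>j<length u + length v. (T ^^ j) x \<in> A ((u @ v) ! j)" and j: "j < length v"
      have "length u + j < length u + length v" using j by simp
      then have "(T ^^ (length u + j)) x \<in> A ((u @ v) ! (length u + j))" using H by blast
      then show "(T ^^ (length u + j)) x \<in> A (v ! j)" by simp
    next
      fix j assume a: "(\<forall>j<length u. (T ^^ j) x \<in> A (u ! j)) \<and>
        (\<forall>j<length v. (T ^^ (length u + j)) x \<in> A (v ! j))" and j: "j < length u + length v"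
      show "(T ^^ j) x \<in> A ((u @ v) ! j)"
      proof (cases "j < length u")
        case True then show ?thesis using a by (simp add: nth_append_left)
      next
        case False
        define i where "i = j - length u"
        have ji: "j = length u + i" "i < length v" using False j by (auto simp: i_def)
        have "(T ^^ (length u + i)) x \<in> A (v ! i)" using a ji(2) by blast
        then show ?thesis unfolding ji(1) by simp
      qed
    qed
    also have "\<dots> \<longleftrightarrow> x \<in> C u \<inter> (T ^^ length u) -` C v"
      by (simp add: cylinder_def add.commute[of "length u"] funpow_add)
    finally have "x \<in> C (u @ v) \<longleftrightarrow> x \<in> C u \<inter> (T ^^ length u) -` C v" . }
  then show ?thesis by blast
qed

end

lemma ent_term_bound:
  fixes p N :: real assumes "p \<ge> 0" "N > 0"
  shows "- p * ln p \<le> p * ln N + 1 / N"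
proof (cases "p = 0")
  case True then show ?thesis using assms by simp
next
  case False
  then have pp: "p > 0" using assms by simp
  have "ln (1 / (p * N)) \<le> 1 / (p * N) - 1"
    by (rule ln_le_minus_one) (use pp assms in simp)
  moreover have "ln (1 / (p * N)) = - ln p - ln N"
    using pp assms by (simp add: ln_div ln_mult)
  ultimately have "- ln p - ln N \<le> 1 / (p * N) - 1" by simp
  then have "p * (- ln p - ln N) \<le> p * (1 / (p * N) - 1)"
    using pp by (intro mult_left_mono) auto
  then show ?thesis using pp assms by (simp add: algebra_simps)
qed

lemma ent_group_bound:
  fixes p :: "'b \<Rightarrow> real"
  assumes W: "finite W" "W \<noteq> {}" and pos: "\<And>w. w \<in> W \<Longrightarrow> p w \<ge> 0"
  shows "- (\<Sum>w\<in>W. p w * log 2 (p w)) \<le> (\<Sum>w\<in>W. p w) * log 2 (card W) + 1 / ln 2"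
proof -
  have N: "real (card W) > 0" using W by (simp add: card_gt_0_iff)
  have "- (\<Sum>w\<in>W. p w * ln (p w)) = (\<Sum>w\<in>W. - p w * ln (p w))" by (simp add: sum_negf)
  also have "\<dots> \<le> (\<Sum>w\<in>W. p w * ln (card W) + 1 / card W)"
    by (intro sum_mono ent_term_bound pos N)
  also have "\<dots> = (\<Sum>w\<in>W. p w) * ln (card W) + 1"
    using N by (simp add: sum.distrib sum_distrib_right)
  finally have *: "- (\<Sum>w\<in>W. p w * ln (p w)) \<le> (\<Sum>w\<in>W. p w) * ln (card W) + 1" .
  have "- (\<Sum>w\<in>W. p w * log 2 (p w)) = (- (\<Sum>w\<in>W. p w * ln (p w))) / ln 2"
    by (simp add: log_def sum_divide_distrib)
  also have "\<dots> \<le> ((\<Sum>w\<in>W. p w) * ln (card W) + 1) / ln 2"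
    by (rule divide_right_mono[OF *]) simp
  also have "\<dots> = (\<Sum>w\<in>W. p w) * log 2 (card W) + 1 / ln 2"
    by (simp add: log_def add_divide_distrib)
  finally show ?thesis .
qed

lemma ent_nonneg_term: "0 \<le> (p::real) \<Longrightarrow> p \<le> 1 \<Longrightarrow> 0 \<le> - (p * log 2 p)"
proof (cases "p = 0")
  case False
  assume "0 \<le> p" "p \<le> 1"
  then have "log 2 p \<le> 0" using False by simp
  then show ?thesis using \<open>0 \<le> p\<close> by (simp add: mult_nonneg_nonpos)
qed simp

lemma gibbs_joint:
  fixes q :: "'u \<Rightarrow> 'v \<Rightarrow> real" and a :: "'u \<Rightarrow> real" and b :: "'v \<Rightarrow> real"
  assumes U: "finite U" and V: "finite V"
    and qpos: "\<And>u v. u \<in> U \<Longrightarrow> v \<in> V \<Longrightarrow> q u v \<ge> 0"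
    and a: "\<And>u. u \<in> U \<Longrightarrow> a u = (\<Sum>v\<in>V. q u v)"
    and b: "\<And>v. v \<in> V \<Longrightarrow> b v = (\<Sum>u\<in>U. q u v)"
    and a1: "(\<Sum>u\<in>U. a u) = 1"
  shows "- (\<Sum>u\<in>U. \<Sum>v\<in>V. q u v * ln (q u v)) \<le>
         - (\<Sum>u\<in>U. a u * ln (a u)) - (\<Sum>v\<in>V. b v * ln (b v))"
proof -
  have apos: "u \<in> U \<Longrightarrow> a u \<ge> 0" for u using a qpos by (simp add: sum_nonneg)
  have bpos: "v \<in> V \<Longrightarrow> b v \<ge> 0" for v using b qpos by (simp add: sum_nonneg)
  have trm: "- q u v * ln (q u v) \<le> - q u v * ln (a u) - q u v * ln (b v) + a u * b v - q u v"
    if u: "u \<in> U" and v: "v \<in> V" for u v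
  proof (cases "q u v = 0")
    case True then show ?thesis using apos[OF u] bpos[OF v] by simp
  next
    case False
    then have qp: "q u v > 0" using qpos[OF u v] by linarith
    have "q u v \<le> a u" unfolding a[OF u] using V v qpos u by (intro member_le_sum) auto
    then have ap: "a u > 0" using qp by simp
    have "q u v \<le> b v" unfolding b[OF v] using U u qpos v by (intro member_le_sum) auto
    then have bp: "b v > 0" using qp by simp
    have "ln (a u * b v / q u v) \<le> a u * b v / q u v - 1"
      by (rule ln_le_minus_one) (use ap bp qp in simp)
    moreover have "ln (a u * b v / q u v) = ln (a u) + ln (b v) - ln (q u v)"
      using ap bp qp by (simp add: ln_div ln_mult)
    ultimately have "ln (a u) + ln (b v) - ln (q u v) \<le> a u * b v / q u v - 1" by simp
    then have "q u v * (ln (a u) + ln (b v) - ln (q u v)) \<le> q u v * (a u * b v / q u v - 1)"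
      using qp by (intro mult_left_mono) auto
    then show ?thesis using qp by (simp add: algebra_simps)
  qed
  have "- (\<Sum>u\<in>U. \<Sum>v\<in>V. q u v * ln (q u v)) = (\<Sum>u\<in>U. \<Sum>v\<in>V. - q u v * ln (q u v))"
    by (simp add: sum_negf)
  also have "\<dots> \<le> (\<Sum>u\<in>U. \<Sum>v\<in>V. - q u v * ln (a u) - q u v * ln (b v) + a u * b v - q u v)"
    by (intro sum_mono trm)
  also have "\<dots> = - (\<Sum>u\<in>U. (\<Sum>v\<in>V. q u v) * ln (a u)) - (\<Sum>v\<in>V. (\<Sum>u\<in>U. q u v) * ln (b v))
      + (\<Sum>u\<in>U. a u) * (\<Sum>v\<in>V. b v) - (\<Sum>u\<in>U. \<Sum>v\<in>V. q u v)"
    by (simp add: sum.distrib sum_subtractf sum_negf sum_distrib_left sum_distrib_right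
        sum.swap[of _ V U] algebra_simps)
  also have "(\<Sum>u\<in>U. (\<Sum>v\<in>V. q u v) * ln (a u)) = (\<Sum>u\<in>U. a u * ln (a u))"
    using a by simp
  also have "(\<Sum>v\<in>V. (\<Sum>u\<in>U. q u v) * ln (b v)) = (\<Sum>v\<in>V. b v * ln (b v))"
    using b by simp
  also have "(\<Sum>v\<in>V. b v) = 1"
  proof -
    have "(\<Sum>v\<in>V. b v) = (\<Sum>v\<in>V. \<Sum>u\<in>U. q u v)" using b by simp
    also have "\<dots> = (\<Sum>u\<in>U. a u)" using a by (simp add: sum.swap[of _ V U])
    finally show ?thesis using a1 by simp
  qed
  also have "(\<Sum>u\<in>U. \<Sum>v\<in>V. q u v) = 1" using a a1 by simp
  finally show ?thesis using a1 by simp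
qed

lemma fekete:
  fixes a :: "nat \<Rightarrow> real"
  assumes sub: "\<And>n k. a (n + k) \<le> a n + a k" and pos: "\<And>n. a n \<ge> 0"
  shows "(\<lambda>n. a n / real n) \<longlonglongrightarrow> (INF n\<in>{1..}. a n / real n)"
proof -
  define L where "L = (INF n\<in>{1..}. a n / real n)"
  have bdd: "bdd_below ((\<lambda>n. a n / real n) ` {1..})"
    by (rule bdd_belowI[of _ 0]) (use pos in auto)
  have Lle: "L \<le> a n / real n" if "n \<ge> 1" for n
    unfolding L_def by (rule cINF_lower[OF bdd]) (use that in auto)
  have mult: "a (q * k + r) \<le> real q * a k + a r" for q k r
  proof (induction q)
    case (Suc q)
    have "a (Suc q * k + r) = a (k + (q * k + r))" by (simp add: algebra_simps)
    also have "\<dots> \<le> a k + a (q * k + r)" by (rule sub)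
    also have "\<dots> \<le> a k + (real q * a k + a r)" using Suc by simp
    finally show ?case by (simp add: algebra_simps)
  qed simp
  show ?thesis unfolding L_def[symmetric]
  proof (rule LIMSEQ_I)
    fix e :: real assume e: "e > 0"
    have "\<exists>k\<in>{1..}. a k / real k < L + e / 2"
    proof (rule ccontr)
      assume "\<not> ?thesis"
      then have "L + e / 2 \<le> L" unfolding L_def by (intro cINF_greatest) (auto simp: not_less)
      then show False using e by simp
    qed
    then obtain k where k: "k \<ge> 1" "a k / real k < L + e / 2" by auto
    define B where "B = (\<Sum>r<k. a r)"
    have Br: "a r \<le> B" if "r < k" for r
      unfolding B_def using that pos by (intro member_le_sum) auto
    have B0: "B \<ge> 0" unfolding B_def using pos by (simp add: sum_nonneg)
    obtain N where N: "N \<ge> 1" "B / real N < e / 2"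
    proof -
      obtain N0 :: nat where "real N0 > 2 * B / e" using reals_Archimedean2 by blast
      then have "B / real (Suc N0) < e / 2" using e B0
        by (simp add: field_simps)
      then show ?thesis using that[of "Suc N0"] by simp
    qed
    show "\<exists>N. \<forall>n\<ge>N. norm (a n / real n - L) < e"
    proof (intro exI allI impI)
      fix n assume n: "n \<ge> N"
      then have n1: "n \<ge> 1" using N by simp
      define q r where "q = n div k" and "r = n mod k"
      have nqr: "n = q * k + r" by (simp add: q_def r_def)
      have rk: "r < k" using k by (simp add: r_def)
      have "a n \<le> real q * a k + B" using mult[of q k r] Br[OF rk] nqr by simp
      moreover have "real q * a k \<le> real n * (a k / real k)"
      proof -
        have "real q * real k \<le> real n" using nqr by (simp flip: of_nat_mult)
        then have "real q * real k * (a k / real k) \<le> real n * (a k / real k)"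
          using pos[of k] k by (intro mult_right_mono) auto
        then show ?thesis using k by simp
      qed
      ultimately have "a n / real n \<le> a k / real k + B / real n"
        using n1 by (simp add: field_simps)
      moreover have "B / real n \<le> B / real N"
        using B0 n N by (intro divide_left_mono) auto
      ultimately have "a n / real n < L + e" using k N by linarith
      moreover have "L \<le> a n / real n" by (rule Lle[OF n1])
      ultimately show "norm (a n / real n - L) < e" by simp
    qed
  qed
qed

context ES begin

interpretation prob_space M by (rule PS)

definition H :: "nat \<Rightarrow> real" where
  "H n = - (\<Sum>w\<in>words n. p w * log 2 (p w))"

definition hh :: real where "hh = (INF n\<in>{1..}. H n / real n)"

lemma join_eq: "join_entropy M m A T n = H n"
  unfolding join_entropy_def H_def p_def words_def using SP by simp

lemma H_nonneg: "H n \<ge> 0"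
proof -
  have "0 \<le> (\<Sum>w\<in>words n. - (p w * log 2 (p w)))"
    by (intro sum_nonneg ent_nonneg_term p_nonneg p_le1)
  then show ?thesis by (simp add: H_def sum_negf)
qed

lemma H_ln: "H n = - (\<Sum>w\<in>words n. p w * ln (p w)) / ln 2"
  by (simp add: H_def log_def sum_divide_distrib)

lemma sum_measure:
  assumes I: "finite I" and S: "\<And>i. i \<in> I \<Longrightarrow> S i \<in> sets M" and R: "R \<in> sets M"
    and eq: "\<And>x. (\<Sum>i\<in>I. indicator (S i) x) = (indicator R x :: real)"
  shows "(\<Sum>i\<in>I. measure M (S i)) = measure M R"
proof -
  have "(\<Sum>i\<in>I. measure M (S i)) = (\<Sum>i\<in>I. integral\<^sup>L M (indicator (S i)))"
    using SP by simp
  also have "\<dots> = integral\<^sup>L M (\<lambda>x. \<Sum>i\<in>I. indicator (S i) x)"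
    by (rule Bochner_Integration.integral_sum[symmetric])
       (auto simp: I emeasure_eq_measure S intro!: integrable_real_indicator)
  also have "\<dots> = integral\<^sup>L M (indicator R)" by (simp add: eq)
  also have "\<dots> = measure M R" using SP by simp
  finally show ?thesis .
qed

lemma words_append_mem: "u \<in> words n \<Longrightarrow> v \<in> words k \<Longrightarrow> u @ v \<in> words (n + k)"
  by (auto simp: words_def strings_over_def)

lemma ind_append: "u \<in> words n \<Longrightarrow>
   indicator (C (u @ v)) x = (indicator (C u) x * indicator (C v) ((T ^^ n) x) :: real)"
  by (simp add: C_append words_def indicator_def)

lemma marg1: assumes u: "u \<in> words n" shows "(\<Sum>v\<in>words k. p (u @ v)) = p u"
  unfolding p_def
proof (rule sum_measure)
  show "C (u @ v) \<in> sets M" if "v \<in> words k" for v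
    using words_append_mem[OF u that] by (rule words_C_meas)
  show "C u \<in> sets M" using u by (rule words_C_meas)
  fix x
  show "(\<Sum>v\<in>words k. indicator (C (u @ v)) x) = (indicator (C u) x :: real)"
    using u by (simp add: ind_append sum_distrib_left[symmetric] ind_sum_one)
qed (simp add: finite_words)

lemma marg2: assumes v: "v \<in> words k" shows "(\<Sum>u\<in>words n. p (u @ v)) = p v"
proof -
  have "(\<Sum>u\<in>words n. p (u @ v)) = measure M ((T ^^ n) -` C v)"
    unfolding p_def
  proof (rule sum_measure)
    show "C (u @ v) \<in> sets M" if "u \<in> words n" for u
      using words_append_mem[OF that v] by (rule words_C_meas)
    show "(T ^^ n) -` C v \<in> sets M"
      using measurable_sets[OF Tn_meas words_C_meas[OF v], of n] SP by simp
    fix x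
    have "(\<Sum>u\<in>words n. indicator (C (u @ v)) x) = (\<Sum>u\<in>words n. indicator (C u) x * (indicator (C v) ((T ^^ n) x) :: real))"
      by (intro sum.cong refl) (simp add: ind_append)
    also have "\<dots> = (\<Sum>u\<in>words n. indicator (C u) x) * (indicator (C v) ((T ^^ n) x) :: real)"
      by (simp add: sum_distrib_right)
    also have "\<dots> = indicator ((T ^^ n) -` C v) x"
      unfolding ind_sum_one by (simp add: indicator_def)
    finally show "(\<Sum>u\<in>words n. indicator (C (u @ v)) x) = (indicator ((T ^^ n) -` C v) x :: real)" .
  qed (simp add: finite_words)
  also have "\<dots> = p v" unfolding p_def by (rule inv_pre[OF words_C_meas[OF v]])
  finally show ?thesis .
qed

lemma words_append_eq: "words (n + k) = (\<lambda>(u, v). u @ v) ` (words n \<times> words k)"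
proof (intro set_eqI iffI)
  fix w assume w: "w \<in> words (n + k)"
  have "take n w \<in> words n" "drop n w \<in> words k" using w
    by (auto simp: words_def strings_over_def dest: in_set_takeD in_set_dropD)
  moreover have "w = take n w @ drop n w" by simp
  ultimately show "w \<in> (\<lambda>(u, v). u @ v) ` (words n \<times> words k)"
    by (intro image_eqI[of _ _ "(take n w, drop n w)"]) simp_all
next
  fix w assume "w \<in> (\<lambda>(u, v). u @ v) ` (words n \<times> words k)"
  then obtain u v where "u \<in> words n" "v \<in> words k" "w = u @ v" by auto
  then show "w \<in> words (n + k)" using words_append_mem by simp
qed

lemma inj_append_words: "inj_on (\<lambda>(u, v). u @ v) (words n \<times> words k)"
proof (rule inj_onI)
  fix x y assume x: "x \<in> words n \<times> words k" and y: "y \<in> words n \<times> words k"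
    and e: "(\<lambda>(u, v). u @ v) x = (\<lambda>(u, v). u @ v) y"
  obtain u v u' v' where xy: "x = (u, v)" "y = (u', v')" by (cases x, cases y) blast
  have l: "length u = length u'" using x y xy by (simp add: words_def)
  have "u @ v = u' @ v'" using e xy by simp
  then have "u = u' \<and> v = v'" using l by simp
  then show "x = y" using xy by simp
qed

lemma H_sub: "H (n + k) \<le> H n + H k"
proof -
  have "(\<Sum>w\<in>words (n + k). p w * ln (p w)) = (\<Sum>(u, v)\<in>words n \<times> words k. p (u @ v) * ln (p (u @ v)))"
    unfolding words_append_eq by (subst sum.reindex[OF inj_append_words]) (simp add: case_prod_beta')
  also have "\<dots> = (\<Sum>u\<in>words n. \<Sum>v\<in>words k. p (u @ v) * ln (p (u @ v)))"
    by (rule sum.cartesian_product[symmetric])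
  finally have eq: "(\<Sum>w\<in>words (n + k). p w * ln (p w)) = (\<Sum>u\<in>words n. \<Sum>v\<in>words k. p (u @ v) * ln (p (u @ v)))" .
  have "- (\<Sum>u\<in>words n. \<Sum>v\<in>words k. p (u @ v) * ln (p (u @ v))) \<le>
        - (\<Sum>u\<in>words n. p u * ln (p u)) - (\<Sum>v\<in>words k. p v * ln (p v))"
    by (rule gibbs_joint[where q = "\<lambda>u v. p (u @ v)"])
       (auto simp: finite_words p_nonneg marg1 marg2 p_sum)
  then have "- (\<Sum>w\<in>words (n + k). p w * ln (p w)) / ln 2 \<le>
      (- (\<Sum>u\<in>words n. p u * ln (p u)) - (\<Sum>v\<in>words k. p v * ln (p v))) / ln 2"
    unfolding eq by (intro divide_right_mono) auto
  then show ?thesis unfolding H_ln by (simp add: diff_divide_distrib)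
qed

lemma H_lim: "(\<lambda>n. H n / real n) \<longlonglongrightarrow> hh"
  unfolding hh_def by (rule fekete[OF H_sub H_nonneg])

lemma metric_eq: "metric_entropy M m A T = hh"
  unfolding metric_entropy_def join_eq using H_lim by (rule limI)

lemma hh_le: "n \<ge> 1 \<Longrightarrow> hh \<le> H n / real n"
  unfolding hh_def by (rule cINF_lower) (auto intro!: bdd_belowI[of _ 0] divide_nonneg_nonneg H_nonneg)

lemma hh_nonneg: "hh \<ge> 0"
  using H_lim by (rule LIMSEQ_le_const) (auto intro!: exI[of _ 0] divide_nonneg_nonneg H_nonneg)

end

context ES begin

interpretation prob_space M by (rule PS)

definition S :: "'a set \<Rightarrow> nat \<Rightarrow> 'a \<Rightarrow> real" where
  "S B n x = (\<Sum>j<n. indicator B ((T ^^ j) x))"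

lemma S_0[simp]: "S B 0 x = 0" by (simp add: S_def)

lemma S_add: "S B (a + b) x = S B a x + S B b ((T ^^ a) x)"
proof (induction b)
  case 0 then show ?case by simp
next
  case (Suc b)
  have "S B (a + Suc b) x = S B (a + b) x + indicator B ((T ^^ (a + b)) x)"
    by (simp add: S_def)
  also have "S B (Suc b) ((T ^^ a) x) = S B b ((T ^^ a) x) + indicator B ((T ^^ b) ((T ^^ a) x))"
    by (simp add: S_def)
  moreover have "(T ^^ (a + b)) x = (T ^^ b) ((T ^^ a) x)"
    by (simp add: funpow_add add.commute[of a])
  ultimately show ?case using Suc by simp
qed

lemma S_Suc: "S B (Suc n) x = indicator B x + S B n (T x)"
  using S_add[of B 1 n x] by (simp add: S_def)

lemma S_nonneg: "S B n x \<ge> 0" by (simp add: S_def sum_nonneg)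

lemma S_le: "S B n x \<le> real n"
proof -
  have "S B n x \<le> (\<Sum>j<n. 1)" unfolding S_def by (intro sum_mono) (simp add: indicator_def)
  then show ?thesis by simp
qed

lemma S_compl: "S (- B) n x = real n - S B n x"
proof -
  have "S (- B) n x = (\<Sum>j<n. 1 - indicator B ((T ^^ j) x))"
    unfolding S_def by (intro sum.cong refl) (simp add: indicator_def)
  then show ?thesis by (simp add: S_def sum_subtractf)
qed

lemma S_meas: assumes [measurable]: "B \<in> sets M" shows "S B n \<in> borel_measurable M"
  unfolding S_def by measurable

lemma S_integral: assumes B: "B \<in> sets M" shows "integral\<^sup>L M (S B n) = real n * measure M B"
proof -
  have pre: "(T ^^ j) -` B \<in> sets M" for j
    using measurable_sets[OF Tn_meas B, of j] SP by simp
  have "integral\<^sup>L M (S B n) = integral\<^sup>L M (\<lambda>x. \<Sum>j<n. indicator ((T ^^ j) -` B) x)"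
    unfolding S_def by (simp add: indicator_def)
  also have "\<dots> = (\<Sum>j<n. integral\<^sup>L M (indicator ((T ^^ j) -` B)))"
    by (rule Bochner_Integration.integral_sum)
       (auto simp: emeasure_eq_measure pre intro!: integrable_real_indicator)
  also have "\<dots> = (\<Sum>j<n. measure M B)" using SP by (simp add: inv_pre[OF B])
  finally show ?thesis by simp
qed

lemma KW_comb:
  fixes t :: real and N :: nat and B Bad :: "'a set"
  assumes t: "t \<ge> 0"
    and Bad: "\<And>x. x \<notin> Bad \<Longrightarrow> \<exists>n\<in>{1..N}. S B n x > t * real n"
  shows "t * real L \<le> S B L x + t * S Bad L x + t * real N"
proof (induction L arbitrary: x rule: less_induct)
  case (less L)
  show ?case
  proof (cases "L \<le> N")
    case True
    then have "t * real L \<le> t * real N" using t by (intro mult_left_mono) auto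
    moreover have "0 \<le> S B L x" "0 \<le> t * S Bad L x" using t S_nonneg by auto
    ultimately show ?thesis by linarith
  next
    case False
    then have LN: "N < L" by simp
    then obtain L' where L': "L = Suc L'" by (cases L) auto
    show ?thesis
    proof (cases "x \<in> Bad")
      case True
      have IH: "t * real L' \<le> S B L' (T x) + t * S Bad L' (T x) + t * real N"
        using less L' by simp
      have "S B L x \<ge> S B L' (T x)" unfolding L' S_Suc by (simp add: indicator_def)
      moreover have "S Bad L x = 1 + S Bad L' (T x)" unfolding L' S_Suc using True by simp
      ultimately show ?thesis using IH L' t by (simp add: algebra_simps)
    next
      case False
      then obtain n where n: "n \<in> {1..N}" "S B n x > t * real n" using Bad by blast
      have nL: "n \<le> L" "L - n < L" using n LN by auto
      have IH: "t * real (L - n) \<le> S B (L - n) ((T ^^ n) x) + t * S Bad (L - n) ((T ^^ n) x) + t * real N"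
        using less(1)[OF nL(2), of "(T ^^ n) x"] .
      have eL: "L = n + (L - n)" using nL by simp
      have "S B L x = S B n x + S B (L - n) ((T ^^ n) x)" by (subst eL, rule S_add)
      moreover have "S Bad L x \<ge> S Bad (L - n) ((T ^^ n) x)"
        using S_add[of Bad n "L - n" x] S_nonneg[of Bad n x] eL by simp
      ultimately show ?thesis using IH n nL t
        by (smt (verit, best) mult_left_mono of_nat_diff right_diff_distrib)
    qed
  qed
qed

lemma le_of_lim:
  fixes a b c :: real
  assumes "\<And>L::nat. L \<ge> 1 \<Longrightarrow> a \<le> b + c / real L"
  shows "a \<le> b"
proof -
  have "(\<lambda>L. b + c / real L) \<longlonglongrightarrow> b + 0"
    by (intro tendsto_add tendsto_const) (rule lim_const_over_n)
  then have lim: "(\<lambda>L. b + c / real L) \<longlonglongrightarrow> b" by simp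
  show ?thesis
    by (rule LIMSEQ_le_const[OF lim]) (use assms in \<open>auto intro!: exI[of _ 1]\<close>)
qed

definition fbar :: "'a set \<Rightarrow> 'a \<Rightarrow> ereal" where
  "fbar B x = limsup (\<lambda>n. ereal (S B n x / real n))"

lemma fbar_meas: assumes [measurable]: "B \<in> sets M" shows "fbar B \<in> borel_measurable M"
proof -
  have [measurable]: "S B n \<in> borel_measurable M" for n by (rule S_meas) simp
  show ?thesis unfolding fbar_def by measurable
qed

lemma fbar_T: "fbar B (T x) = fbar B x"
proof -
  define u where "u n = S B n (T x) / real n" for n
  define v where "v n = S B (Suc n) x / real (Suc n)" for n
  have d: "(\<lambda>n. v n - u n) \<longlonglongrightarrow> 0"
  proof (rule tendsto_sandwich[of "\<lambda>n. - (2 / real (Suc n))" _ _ "\<lambda>n. 2 / real (Suc n)"])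
    have bnd: "\<bar>v n - u n\<bar> \<le> 2 / real (Suc n)" for n
    proof (cases "n = 0")
      case True then show ?thesis
        by (simp add: u_def v_def S_Suc indicator_def)
    next
      case False
      have "v n - u n = indicator B x / real (Suc n) + S B n (T x) * (1 / real (Suc n) - 1 / real n)"
        by (simp add: u_def v_def S_Suc add_divide_distrib algebra_simps)
      also have "S B n (T x) * (1 / real (Suc n) - 1 / real n) = - (S B n (T x) / real n) / real (Suc n)"
        using False by (simp add: field_simps)
      finally have eq: "v n - u n = indicator B x / real (Suc n) - (S B n (T x) / real n) / real (Suc n)" by simp
      have "0 \<le> S B n (T x) / real n" "S B n (T x) / real n \<le> 1"
        using S_nonneg S_le[of B n "T x"] False by (auto simp: divide_le_eq_1)
      moreover have "0 \<le> (indicator B x :: real)" "(indicator B x :: real) \<le> 1" by (auto simp: indicator_def)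
      ultimately have "\<bar>indicator B x - S B n (T x) / real n\<bar> \<le> (2::real)"
        by (cases "x \<in> B") (auto simp: abs_le_iff)
      moreover have "v n - u n = (indicator B x - S B n (T x) / real n) / real (Suc n)"
        unfolding eq by (simp add: diff_divide_distrib)
      ultimately show ?thesis by (simp add: abs_divide divide_right_mono del: of_nat_Suc)
    qed
    have lo: "- (2 / real (Suc n)) \<le> v n - u n" for n
      using bnd[of n] unfolding abs_le_iff by linarith
    have hi: "v n - u n \<le> 2 / real (Suc n)" for n
      using bnd[of n] unfolding abs_le_iff by linarith
    show "\<forall>\<^sub>F n in sequentially. - (2 / real (Suc n)) \<le> v n - u n"
      by (intro always_eventually allI lo)
    show "\<forall>\<^sub>F n in sequentially. v n - u n \<le> 2 / real (Suc n)"
      by (intro always_eventually allI hi)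
    have "(\<lambda>n. 2 / real (Suc n)) \<longlonglongrightarrow> 0"
      using LIMSEQ_Suc[OF lim_const_over_n[of 2]] by simp
    then show "(\<lambda>n. 2 / real (Suc n)) \<longlonglongrightarrow> 0" .
    then show "(\<lambda>n. - (2 / real (Suc n))) \<longlonglongrightarrow> 0" using tendsto_minus[of _ 0] by fastforce
  qed
  have "fbar B x = limsup (\<lambda>n. ereal (S B (n + 1) x / real (n + 1)))"
    unfolding fbar_def by (rule limsup_shift[symmetric])
  also have "\<dots> = limsup (\<lambda>n. ereal (v n - u n) + ereal (u n))"
    by (simp add: v_def)
  also have "\<dots> = 0 + limsup (\<lambda>n. ereal (u n))"
    by (rule ereal_limsup_lim_add) (use d in \<open>auto simp: zero_ereal_def\<close>)
  also have "\<dots> = fbar B (T x)" by (simp add: fbar_def u_def)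
  finally show ?thesis by simp
qed

lemma invariant_01:
  assumes Q: "Q \<in> sets M" and inv: "\<And>x. x \<in> Q \<longleftrightarrow> T x \<in> Q"
  shows "measure M Q = 0 \<or> measure M Q = 1"
proof -
  have "T -` Q \<inter> space M = Q" using inv SP by auto
  then show ?thesis using ERG Q by (simp add: ergodic_def)
qed

lemma KW_bound:
  assumes B: "B \<in> sets M" and t: "t \<ge> 0"
    and Q1: "measure M {x. ereal t < fbar B x} = 1"
  shows "t \<le> measure M B"
proof -
  have [measurable]: "B \<in> sets M" by (rule B)
  have Sm[measurable]: "S B n \<in> borel_measurable M" for n by (rule S_meas) simp
  define Bad where "Bad N = {x. \<forall>n\<in>{1..N}. S B n x \<le> t * real n}" for N
  have Bad_meas: "Bad N \<in> sets M" for N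
  proof -
    have "Bad N = space M \<inter> {x\<in>space M. \<forall>n\<in>{1..N}. S B n x \<le> t * real n}" using SP by (simp add: Bad_def)
    also have "\<dots> \<in> sets M" by measurable
    finally show ?thesis .
  qed
  have step: "t * (1 - measure M (Bad N)) \<le> measure M B" for N
  proof (rule le_of_lim[where c = "t * real N"])
    fix L :: nat assume L: "L \<ge> 1"
    have pw: "t * real L \<le> S B L x + t * S (Bad N) L x + t * real N" for x
      by (rule KW_comb[OF t]) (auto simp: Bad_def not_le)
    have "integral\<^sup>L M (\<lambda>x. t * real L) \<le> integral\<^sup>L M (\<lambda>x. S B L x + t * S (Bad N) L x + t * real N)"
    proof (rule integral_mono)
      show "integrable M (\<lambda>x. S B L x + t * S (Bad N) L x + t * real N)"
      proof (intro Bochner_Integration.integrable_add integrable_mult_right integrable_const)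
        show "integrable M (S B L)"
          by (rule integrable_const_bound[where B="real L"]) (auto simp: S_le S_nonneg)
        have [measurable]: "S (Bad N) L \<in> borel_measurable M" by (rule S_meas[OF Bad_meas])
        show "integrable M (S (Bad N) L)"
          by (rule integrable_const_bound[where B="real L"]) (auto simp: S_le S_nonneg)
      qed
    qed (auto simp: pw)
    also have "\<dots> = real L * measure M B + t * (real L * measure M (Bad N)) + t * real N"
    proof -
      have iB: "integrable M (S B L)"
        by (rule integrable_const_bound[where B="real L"]) (auto simp: S_le S_nonneg)
      have [measurable]: "S (Bad N) L \<in> borel_measurable M" by (rule S_meas[OF Bad_meas])
      have iBad: "integrable M (S (Bad N) L)"
        by (rule integrable_const_bound[where B="real L"]) (auto simp: S_le S_nonneg)
      show ?thesis using iB iBad prob_space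
        by (simp add: S_integral[OF B] S_integral[OF Bad_meas])
    qed
    finally have "t * real L \<le> real L * measure M B + t * (real L * measure M (Bad N)) + t * real N"
      using prob_space by simp
    then have "real L * (t * (1 - measure M (Bad N))) \<le> real L * (measure M B + t * real N / real L)"
      using L by (simp add: algebra_simps)
    then show "t * (1 - measure M (Bad N)) \<le> measure M B + t * real N / real L"
      using L by (simp add: mult_le_cancel_left_pos)
  qed
  define D where "D = (\<Inter>N. Bad N)"
  have "decseq Bad" unfolding decseq_def Bad_def by auto
  then have lim: "(\<lambda>N. measure M (Bad N)) \<longlonglongrightarrow> measure M D"
    unfolding D_def by (intro finite_Lim_measure_decseq) (auto simp: Bad_meas)
  have "D \<subseteq> space M - {x. ereal t < fbar B x}"
  proof
    fix x assume x: "x \<in> D"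
    have "\<not> ereal t < fbar B x"
    proof
      assume "ereal t < fbar B x"
      then have "ereal t < limsup (\<lambda>n. ereal (S B (n + 1) x / real (n + 1)))"
        using limsup_shift[of "\<lambda>n. ereal (S B n x / real n)"] unfolding fbar_def by simp
      then obtain i where "ereal t < ereal (S B (i + 1) x / real (i + 1))" using Limsup_obtain by blast
      then have "S B (i + 1) x > t * real (i + 1)" by (simp add: field_simps)
      moreover have "x \<in> Bad (i + 1)" using x by (simp add: D_def)
      then have "S B (i + 1) x \<le> t * real (i + 1)" unfolding Bad_def
        using bspec[of "{1..i+1}" "\<lambda>n. S B n x \<le> t * real n" "i + 1"] by simp
      ultimately show False by simp
    qed
    then show "x \<in> space M - {x. ereal t < fbar B x}" using SP by simp
  qed
  moreover have Qm: "{x. ereal t < fbar B x} \<in> sets M"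
  proof -
    have "{x. ereal t < fbar B x} = {x \<in> space M. ereal t < fbar B x}" using SP by simp
    also have "\<dots> \<in> sets M" using fbar_meas[OF B] by measurable
    finally show ?thesis .
  qed
  ultimately have "measure M D \<le> measure M (space M - {x. ereal t < fbar B x})"
    by (intro finite_measure_mono) auto
  also have "\<dots> = 0" using Q1 Qm by (simp add: prob_compl)
  finally have D0: "measure M D = 0" by (simp add: measure_nonneg antisym)
  have "(\<lambda>N. t * (1 - measure M (Bad N))) \<longlonglongrightarrow> t * (1 - measure M D)"
    by (intro tendsto_intros lim)
  then have "t * (1 - measure M D) \<le> measure M B"
    by (rule LIMSEQ_le_const2) (use step in auto)
  then show ?thesis using D0 by simp
qed

lemma limsup_avg_le:
  assumes B: "B \<in> sets M"
  shows "AE x in M. fbar B x \<le> ereal (measure M B)"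
proof -
  have Qm: "{x. ereal t < fbar B x} \<in> sets M" for t
  proof -
    have "{x. ereal t < fbar B x} = {x \<in> space M. ereal t < fbar B x}" using SP by simp
    also have "\<dots> \<in> sets M" using fbar_meas[OF B] by measurable
    finally show ?thesis .
  qed
  have "AE x in M. fbar B x \<le> ereal (measure M B + 1 / real (Suc k))" for k
  proof -
    define t where "t = measure M B + 1 / real (Suc k)"
    have t0: "t \<ge> 0" unfolding t_def by (simp add: add_nonneg_nonneg)
    have "measure M {x. ereal t < fbar B x} = 0 \<or> measure M {x. ereal t < fbar B x} = 1"
      by (rule invariant_01[OF Qm]) (simp add: fbar_T)
    moreover have "measure M {x. ereal t < fbar B x} \<noteq> 1"
    proof
      assume "measure M {x. ereal t < fbar B x} = 1"
      from KW_bound[OF B t0 this] show False by (simp add: t_def)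
    qed
    ultimately have "measure M {x. ereal t < fbar B x} = 0" by simp
    then have "{x. ereal t < fbar B x} \<in> null_sets M" using Qm by (simp add: emeasure_eq_measure null_sets_def)
    then have "AE x in M. x \<notin> {x. ereal t < fbar B x}" by (rule AE_not_in)
    then show ?thesis by (simp add: t_def not_less)
  qed
  then have "AE x in M. \<forall>k. fbar B x \<le> ereal (measure M B + 1 / real (Suc k))"
    by (simp add: AE_all_countable)
  then show ?thesis
  proof (rule AE_mp[OF _ AE_I2], intro impI)
    fix x assume H: "\<forall>k. fbar B x \<le> ereal (measure M B + 1 / real (Suc k))"
    have "(\<lambda>k. measure M B + 1 / real (Suc k)) \<longlonglongrightarrow> measure M B + 0"
      by (intro tendsto_add tendsto_const LIMSEQ_Suc[OF lim_const_over_n])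
    then have lim: "(\<lambda>k. ereal (measure M B + 1 / real (Suc k))) \<longlonglongrightarrow> ereal (measure M B)"
      by (intro tendsto_ereal) simp
    show "fbar B x \<le> ereal (measure M B)"
      by (rule LIMSEQ_le_const[OF lim]) (use H in auto)
  qed
qed

lemma birkhoff:
  assumes B: "B \<in> sets M"
  shows "AE x in M. (\<lambda>n. S B n x / real n) \<longlonglongrightarrow> measure M B"
proof -
  have Bc: "- B \<in> sets M" using B SP sets.compl_sets[of B M] by (simp add: Compl_eq_Diff_UNIV)
  have mc: "measure M (- B) = 1 - measure M B"
    using prob_compl[OF B] SP by (simp add: Compl_eq_Diff_UNIV)
  show ?thesis
    using limsup_avg_le[OF B] limsup_avg_le[OF Bc]
  proof (eventually_elim)
    case (elim x)
    define a where "a n = S B n x / real n" for n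
    have "limsup (\<lambda>n. ereal (a n)) \<le> ereal (measure M B)" using elim(1) by (simp add: fbar_def a_def)
    moreover have "ereal (measure M B) \<le> liminf (\<lambda>n. ereal (a n))"
    proof -
      have "limsup (\<lambda>n. ereal (S (- B) n x / real n)) = limsup (\<lambda>n. ereal 1 + (- ereal (a n)))"
      proof (rule Limsup_eq)
        show "\<forall>\<^sub>F n in sequentially. ereal (S (- B) n x / real n) = ereal 1 + - ereal (a n)"
          using eventually_gt_at_top[of 0]
          by eventually_elim (simp add: S_compl a_def diff_divide_distrib)
      qed
      also have "\<dots> = ereal 1 + limsup (\<lambda>n. - ereal (a n))"
        by (rule ereal_limsup_lim_add) auto
      also have "limsup (\<lambda>n. - ereal (a n)) = - liminf (\<lambda>n. ereal (a n))"
      proof -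
        have "liminf (\<lambda>n. - (- ereal (a n))) = - limsup (\<lambda>n. - ereal (a n))"
          by (rule ereal_Liminf_uminus)
        then have "liminf (\<lambda>n. ereal (a n)) = - limsup (\<lambda>n. - ereal (a n))"
          by (simp only: ereal_uminus_uminus)
        then show ?thesis by (metis ereal_uminus_uminus)
      qed
      finally have "ereal 1 - liminf (\<lambda>n. ereal (a n)) \<le> ereal (1 - measure M B)"
        using elim(2) mc by (simp add: fbar_def minus_ereal_def)
      then show ?thesis
        by (cases "liminf (\<lambda>n. ereal (a n))") auto
    qed
    ultimately show ?case unfolding a_def[symmetric] by (rule limsup_le_liminf_real)
  qed
qed

end

lemma xlogx_right0: "((\<lambda>y::real. y * log 2 y) \<longlongrightarrow> 0) (at_right 0)"
  unfolding log_def by real_asymp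

lemma xlogx_tendsto:
  fixes a :: "nat \<Rightarrow> real"
  assumes pos: "\<And>n. a n \<ge> 0" and lim: "a \<longlonglongrightarrow> L"
  shows "(\<lambda>n. a n * log 2 (a n)) \<longlonglongrightarrow> L * log 2 L"
proof -
  have L0: "L \<ge> 0" using lim by (rule LIMSEQ_le_const) (use pos in auto)
  show ?thesis
  proof (cases "L = 0")
    case False
    then have "L > 0" using L0 by simp
    then show ?thesis by (intro tendsto_intros lim) auto
  next
    case True
    have "continuous (at 0 within {0..}) (\<lambda>y::real. y * log 2 y)"
      unfolding continuous_within at_within_Ici_at_right using xlogx_right0 by simp
    from continuous_within_tendsto_compose'[OF this _ lim[unfolded True]]
    show ?thesis using pos True by simp
  qed
qed

context ES begin

interpretation prob_space M by (rule PS)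

lemma om_shift: "om ((T ^^ i) x) j = om x (i + j)"
proof -
  have "(T ^^ j) ((T ^^ i) x) = (T ^^ (i + j)) x" by (simp add: funpow_add add.commute[of i])
  then show ?thesis using om_prop[of x "i + j"] by (intro om_eq) auto
qed

lemma om_shift': "om ((T ^^ i) x) = (\<lambda>j. om x (i + j))"
  by (rule ext) (rule om_shift)

lemma take_drop_prefix:
  assumes "i + k \<le> n"
  shows "take k (drop i (prefix_of \<omega> n)) = prefix_of (\<lambda>j. \<omega> (i + j)) k"
proof (rule nth_equalityI)
  show "length (take k (drop i (prefix_of \<omega> n))) = length (prefix_of (\<lambda>j. \<omega> (i + j)) k)"
    using assms by (simp add: prefix_of_def)
  fix j assume "j < length (take k (drop i (prefix_of \<omega> n)))"
  then have j: "j < k" using assms by (simp add: prefix_of_def)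
  then show "take k (drop i (prefix_of \<omega> n)) ! j = prefix_of (\<lambda>j. \<omega> (i + j)) k ! j"
    using assms by (simp add: prefix_of_def nth_take nth_drop)
qed

lemma S_card: "S B N x = real (card {j. j < N \<and> (T ^^ j) x \<in> B})"
proof -
  have "real (card {j\<in>{..<N}. (T ^^ j) x \<in> B}) = (\<Sum>j\<in>{j\<in>{..<N}. (T ^^ j) x \<in> B}. (1::real))"
    by simp
  also have "\<dots> = (\<Sum>j\<in>{..<N}. if (T ^^ j) x \<in> B then 1 else 0)"
    by (rule sum.inter_filter) simp
  also have "\<dots> = S B N x" unfolding S_def by (intro sum.cong refl) (simp add: indicator_def)
  also have "{j\<in>{..<N}. (T ^^ j) x \<in> B} = {j. j < N \<and> (T ^^ j) x \<in> B}" by auto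
  finally show ?thesis by simp
qed

lemma freq_eq:
  assumes w: "w \<in> words k" and kn: "k \<le> n"
  shows "emp_freq (prefix_of (om x) n) w = S (C w) (n - k + 1) x / real (n - k + 1)"
proof -
  have lw: "length w = k" using w by (simp add: words_def)
  have ls: "length (prefix_of (om x) n) = n" by (simp add: prefix_of_def)
  have "{i. i \<le> n - k \<and> take k (drop i (prefix_of (om x) n)) = w} =
        {j. j < n - k + 1 \<and> (T ^^ j) x \<in> C w}"
  proof (intro set_eqI iffI)
    fix i assume "i \<in> {i. i \<le> n - k \<and> take k (drop i (prefix_of (om x) n)) = w}"
    then have i: "i \<le> n - k" and e: "take k (drop i (prefix_of (om x) n)) = w" by auto
    have "prefix_of (om ((T ^^ i) x)) k = w"
      using e take_drop_prefix[of i k n "om x"] i kn by (simp add: om_shift')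
    then show "i \<in> {j. j < n - k + 1 \<and> (T ^^ j) x \<in> C w}" using C_iff[OF w] i by auto
  next
    fix i assume "i \<in> {j. j < n - k + 1 \<and> (T ^^ j) x \<in> C w}"
    then have i: "i \<le> n - k" and c: "(T ^^ i) x \<in> C w" by auto
    have "prefix_of (om ((T ^^ i) x)) k = w" using C_iff[OF w] c by simp
    then show "i \<in> {i. i \<le> n - k \<and> take k (drop i (prefix_of (om x) n)) = w}"
      using take_drop_prefix[of i k n "om x"] i kn by (simp add: om_shift')
  qed
  then show ?thesis unfolding emp_freq_def ls lw S_card by simp
qed

lemma freq_lim:
  assumes w: "w \<in> words k"
  shows "AE x in M. (\<lambda>n. emp_freq (prefix_of (om x) n) w) \<longlonglongrightarrow> p w"
  using birkhoff[OF words_C_meas[OF w]]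
proof (rule AE_mp[OF _ AE_I2], intro impI)
  fix x assume lim: "(\<lambda>n. S (C w) n x / real n) \<longlonglongrightarrow> measure M (C w)"
  have "(\<lambda>n. S (C w) (n + 1) x / real (n + 1)) \<longlonglongrightarrow> measure M (C w)"
    using LIMSEQ_ignore_initial_segment[OF lim, of 1] by simp
  moreover have "emp_freq (prefix_of (om x) (n + k)) w = S (C w) (n + 1) x / real (n + 1)" for n
    using freq_eq[OF w, of "n + k" x] by simp
  ultimately have "(\<lambda>n. emp_freq (prefix_of (om x) (n + k)) w) \<longlonglongrightarrow> p w"
    by (simp add: p_def)
  then show "(\<lambda>n. emp_freq (prefix_of (om x) n) w) \<longlonglongrightarrow> p w"
    by (rule LIMSEQ_offset)
qed

lemma freq_nonneg: "emp_freq s w \<ge> 0" by (simp add: emp_freq_def)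

lemma ent_lim:
  assumes k: "k \<ge> 1"
  shows "AE x in M. (\<lambda>n. emp_entropy m k (prefix_of (om x) n)) \<longlonglongrightarrow> H k / real k"
proof -
  have "AE x in M. \<forall>w\<in>words k. (\<lambda>n. emp_freq (prefix_of (om x) n) w) \<longlonglongrightarrow> p w"
    by (subst AE_ball_countable) (auto intro: countable_finite finite_words freq_lim)
  then show ?thesis
  proof (rule AE_mp[OF _ AE_I2], intro impI)
    fix x assume H: "\<forall>w\<in>words k. (\<lambda>n. emp_freq (prefix_of (om x) n) w) \<longlonglongrightarrow> p w"
    have "(\<lambda>n. - (1 / real k) * (\<Sum>w\<in>words k. emp_freq (prefix_of (om x) n) w * log 2 (emp_freq (prefix_of (om x) n) w)))
        \<longlonglongrightarrow> - (1 / real k) * (\<Sum>w\<in>words k. p w * log 2 (p w))"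
      by (intro tendsto_mult tendsto_const tendsto_sum xlogx_tendsto freq_nonneg) (use H in auto)
    moreover have "- (1 / real k) * (\<Sum>w\<in>words k. p w * log 2 (p w)) = H k / real k"
      by (simp add: H_def)
    ultimately show "(\<lambda>n. emp_entropy m k (prefix_of (om x) n)) \<longlonglongrightarrow> H k / real k"
      by (simp add: emp_entropy_def words_def)
  qed
qed

lemma upper_k:
  assumes CO: "coarsely_optimal m Z" and k: "k \<ge> 1"
  shows "AE x in M. K_Z_point Z m A T x \<le> ereal (H k / real k)"
proof -
  obtain f :: "nat \<Rightarrow> real" where f: "f \<in> o(\<lambda>n. real n)"
    and bnd: "\<And>s. s \<in> strings_over m \<Longrightarrow> real (length (Z s)) \<le> real (length s) * emp_entropy m k s + f (length s)"
    using CO k unfolding coarsely_optimal_def by blast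
  have f0: "(\<lambda>n. f n / real n) \<longlonglongrightarrow> 0" using smalloD_tendsto[OF f] by simp
  show ?thesis
    using ent_lim[OF k]
  proof (rule AE_mp[OF _ AE_I2], intro impI)
    fix x assume E: "(\<lambda>n. emp_entropy m k (prefix_of (om x) n)) \<longlonglongrightarrow> H k / real k"
    define E where "E n = emp_entropy m k (prefix_of (om x) n)" for n
    have le: "real (length (Z (prefix_of (om x) n))) / real n \<le> E n + f n / real n" if n: "n \<ge> 1" for n
    proof -
      have sm: "prefix_of (om x) n \<in> strings_over m" using prefix_words[of x n] by (simp add: words_def)
      have "real (length (Z (prefix_of (om x) n))) \<le> real n * E n + f n"
        using bnd[OF sm] by (simp add: E_def prefix_of_def)
      then show ?thesis using n by (simp add: field_simps)
    qed
    have lim: "(\<lambda>n. ereal (E n + f n / real n)) \<longlonglongrightarrow> ereal (H k / real k + 0)"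
      by (intro tendsto_ereal tendsto_add f0) (use E in \<open>simp add: E_def\<close>)
    have "K_Z_point Z m A T x = limsup (\<lambda>n. ereal (real (length (Z (prefix_of (om x) n))) / real n))"
      by (simp add: K_Z_point_def K_Z_def)
    also have "\<dots> \<le> limsup (\<lambda>n. ereal (E n + f n / real n))"
      by (rule Limsup_mono) (use le in \<open>auto intro!: eventually_sequentiallyI[of 1]\<close>)
    also have "\<dots> = ereal (H k / real k)"
      using lim_imp_Limsup[OF trivial_limit_sequentially lim] by simp
    finally show "K_Z_point Z m A T x \<le> ereal (H k / real k)" .
  qed
qed

lemma upper:
  assumes CO: "coarsely_optimal m Z"
  shows "AE x in M. K_Z_point Z m A T x \<le> ereal hh"
proof -
  have "AE x in M. \<forall>k. K_Z_point Z m A T x \<le> ereal (H (Suc k) / real (Suc k))"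
    by (subst AE_all_countable) (intro allI upper_k[OF CO], simp)
  then show ?thesis
  proof (rule AE_mp[OF _ AE_I2], intro impI)
    fix x assume Hx: "\<forall>k. K_Z_point Z m A T x \<le> ereal (H (Suc k) / real (Suc k))"
    have "(\<lambda>k. H (Suc k) / real (Suc k)) \<longlonglongrightarrow> hh" using LIMSEQ_Suc[OF H_lim] .
    then have lim: "(\<lambda>k. ereal (H (Suc k) / real (Suc k))) \<longlonglongrightarrow> ereal hh" by (rule tendsto_ereal)
    show "K_Z_point Z m A T x \<le> ereal hh"
      by (rule LIMSEQ_le_const[OF lim]) (use Hx in auto)
  qed
qed

end

lemma card_bool_lists_le: "card {xs :: bool list. length xs \<le> K} \<le> 2 ^ (K + 1)"
proof -
  have "card {xs :: bool list. length xs \<le> K} = (\<Sum>i\<le>K. 2 ^ i)"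
    using card_lists_length_le[of "UNIV :: bool set" K] by simp
  also have "\<dots> \<le> 2 ^ (K + 1)"
    by (induction K) auto
  finally show ?thesis .
qed

lemma ent_group_bound':
  fixes p :: "'b \<Rightarrow> real"
  assumes W: "finite W" and pos: "\<And>w. w \<in> W \<Longrightarrow> p w \<ge> 0"
    and K: "real (card W) \<le> K"
  shows "- (\<Sum>w\<in>W. p w * log 2 (p w)) \<le> (\<Sum>w\<in>W. p w) * log 2 K + 1 / ln 2"
proof (cases "W = {}")
  case True then show ?thesis by simp
next
  case False
  have c: "real (card W) > 0" using W False by (simp add: card_gt_0_iff)
  have "- (\<Sum>w\<in>W. p w * log 2 (p w)) \<le> (\<Sum>w\<in>W. p w) * log 2 (card W) + 1 / ln 2"
    by (rule ent_group_bound[OF W False pos])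
  also have "(\<Sum>w\<in>W. p w) * log 2 (card W) \<le> (\<Sum>w\<in>W. p w) * log 2 K"
    using c K pos by (intro mult_left_mono sum_nonneg) auto
  finally show ?thesis by simp
qed

context ES begin

interpretation prob_space M by (rule PS)

definition muC :: "nat \<Rightarrow> 'a \<Rightarrow> real" where
  "muC n x = p (prefix_of (om x) n)"

lemma muC_set: "{x. Q (muC n x)} \<in> sets M"
  unfolding muC_def by (rule pref_set_meas)

lemma UNIV_sets: "UNIV \<in> sets M" using sets.top[of M] SP by simp

lemma muC_Suc: "muC (Suc n) x \<le> muC n (T x)"
proof -
  have e: "prefix_of (om x) (Suc n) = [om x 0] @ prefix_of (om (T x)) n"
  proof (rule nth_equalityI)
    fix j assume "j < length (prefix_of (om x) (Suc n))"
    then have j: "j < Suc n" by (simp add: prefix_of_def)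
    show "prefix_of (om x) (Suc n) ! j = ([om x 0] @ prefix_of (om (T x)) n) ! j"
    proof (cases j)
      case 0 then show ?thesis by (simp add: prefix_of_def del: upt_Suc)
    next
      case (Suc i)
      then have "i < n" using j by simp
      then have "prefix_of (om x) (Suc n) ! j = om x (Suc i)" using Suc by (simp add: prefix_of_def del: upt_Suc)
      moreover have "([om x 0] @ prefix_of (om (T x)) n) ! j = om (T x) i"
        using Suc \<open>i < n\<close> by (simp add: prefix_of_def)
      ultimately show ?thesis using om_shift[of 1 x i] by simp
    qed
  qed (simp add: prefix_of_def)
  have w: "prefix_of (om (T x)) n \<in> words n" by (rule prefix_words)
  have w1: "[om x 0] @ prefix_of (om (T x)) n \<in> words (Suc n)"
    using e prefix_words[of x "Suc n"] by simp
  have "muC (Suc n) x = measure M (C ([om x 0] @ prefix_of (om (T x)) n))"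
    unfolding muC_def p_def e ..
  also have "\<dots> \<le> measure M ((T ^^ 1) -` C (prefix_of (om (T x)) n))"
  proof (rule finite_measure_mono)
    show "C ([om x 0] @ prefix_of (om (T x)) n) \<subseteq> (T ^^ 1) -` C (prefix_of (om (T x)) n)"
      by (simp only: C_append) auto
    show "(T ^^ 1) -` C (prefix_of (om (T x)) n) \<in> sets M"
      using measurable_sets[OF Tn_meas words_C_meas[OF w], of 1] SP by simp
  qed
  also have "\<dots> = muC n (T x)"
    unfolding muC_def p_def by (rule inv_pre[OF words_C_meas[OF w]])
  finally show ?thesis .
qed

lemma muC_pos_AE: "AE x in M. \<forall>n. muC n x > 0"
proof -
  have "AE x in M. \<forall>w\<in>words n. p w = 0 \<longrightarrow> x \<notin> C w" for n
  proof (subst AE_ball_countable)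
    show "countable (words n)" by (intro countable_finite finite_words)
    show "\<forall>w\<in>words n. AE x in M. p w = 0 \<longrightarrow> x \<notin> C w"
    proof
      fix w assume w: "w \<in> words n"
      show "AE x in M. p w = 0 \<longrightarrow> x \<notin> C w"
      proof (cases "p w = 0")
        case True
        then have "C w \<in> null_sets M" using words_C_meas[OF w]
          by (simp add: p_def emeasure_eq_measure null_sets_def)
        then have "AE x in M. x \<notin> C w" by (rule AE_not_in)
        then show ?thesis by auto
      qed simp
    qed
  qed
  then have "AE x in M. \<forall>n. \<forall>w\<in>words n. p w = 0 \<longrightarrow> x \<notin> C w"
    by (simp add: AE_all_countable)
  then show ?thesis
  proof (rule AE_mp[OF _ AE_I2], intro impI allI)
    fix x n assume H: "\<forall>n. \<forall>w\<in>words n. p w = 0 \<longrightarrow> x \<notin> C w"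
    have "x \<in> C (prefix_of (om x) n)" using C_iff[OF prefix_words] by simp
    then have "p (prefix_of (om x) n) \<noteq> 0" using H prefix_words by blast
    then show "muC n x > 0" using p_nonneg[of "prefix_of (om x) n"] by (simp add: muC_def less_le)
  qed
qed

definition Io :: "real \<Rightarrow> 'a set" where
  "Io t = {x. \<forall>N. \<exists>n\<ge>N. muC n x \<le> 2 powr (- t * real n)}"

definition Ro :: "real \<Rightarrow> 'a set" where
  "Ro t = {x. \<forall>k. x \<in> Io (t - 1 / real (Suc k))}"

lemma Io_meas: "Io t \<in> sets M"
proof -
  have "Io t = (\<Inter>N\<in>UNIV. \<Union>n\<in>{N..}. {x. muC n x \<le> 2 powr (- t * real n)})"
    by (auto simp: Io_def)
  also have "\<dots> \<in> sets M"
    by (intro sets.countable_INT'' sets.countable_UN'' UNIV_sets muC_set) auto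
  finally show ?thesis .
qed

lemma Ro_meas: "Ro t \<in> sets M"
proof -
  have "Ro t = (\<Inter>k\<in>UNIV. Io (t - 1 / real (Suc k)))" by (auto simp: Ro_def)
  also have "\<dots> \<in> sets M" by (intro sets.countable_INT'' UNIV_sets Io_meas) auto
  finally show ?thesis .
qed

lemma Io_mono: "s' \<le> s \<Longrightarrow> x \<in> Io s \<Longrightarrow> x \<in> Io s'"
proof -
  assume s: "s' \<le> s" and x: "x \<in> Io s"
  have "2 powr (- s * real n) \<le> 2 powr (- s' * real n)" for n
    using s by (intro powr_mono) (auto intro: mult_right_mono)
  note le = this
  show ?thesis unfolding Io_def
  proof (intro CollectI allI)
    fix N
    obtain n where "n \<ge> N" "muC n x \<le> 2 powr (- s * real n)" using x unfolding Io_def by blast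
    moreover note le[of n]
    ultimately have "muC n x \<le> 2 powr (- s' * real n)" by linarith
    then show "\<exists>n\<ge>N. muC n x \<le> 2 powr (- s' * real n)" using \<open>n \<ge> N\<close> by blast
  qed
qed

lemma Io_T: assumes "s' < s" "T x \<in> Io s" shows "x \<in> Io s'"
proof -
  obtain N0 :: nat where N0: "real N0 \<ge> \<bar>s'\<bar> / (s - s')" using real_arch_simple by blast
  show ?thesis unfolding Io_def
  proof (intro CollectI allI)
    fix N
    obtain n where n: "n \<ge> max N N0" "muC n (T x) \<le> 2 powr (- s * real n)"
      using assms(2) unfolding Io_def by blast
    have "s' * real (Suc n) \<le> s * real n"
    proof -
      have "\<bar>s'\<bar> \<le> (s - s') * real n"
      proof -
        have "\<bar>s'\<bar> / (s - s') \<le> real n" using N0 n(1) by simp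
        then show ?thesis using assms(1) by (simp add: divide_le_eq mult.commute)
      qed
      then show ?thesis by (simp add: algebra_simps)
    qed
    then have "2 powr (- s * real n) \<le> 2 powr (- s' * real (Suc n))" by (intro powr_mono) auto
    then have "muC (Suc n) x \<le> 2 powr (- s' * real (Suc n))"
      using muC_Suc[of n x] n(2) by linarith
    then show "\<exists>n\<ge>N. muC n x \<le> 2 powr (- s' * real n)" using n(1) by (intro exI[of _ "Suc n"]) auto
  qed
qed

lemma Ro_T: "T x \<in> Ro t \<Longrightarrow> x \<in> Ro t"
proof -
  assume H: "T x \<in> Ro t"
  show "x \<in> Ro t" unfolding Ro_def
  proof (intro CollectI allI)
    fix k
    have "T x \<in> Io (t - 1 / real (Suc (Suc k)))" using H unfolding Ro_def by blast
    moreover have "t - 1 / real (Suc k) < t - 1 / real (Suc (Suc k))"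
      by (simp add: frac_less2)
    ultimately show "x \<in> Io (t - 1 / real (Suc k))" using Io_T by blast
  qed
qed

lemma Ro_Io: "s < t \<Longrightarrow> x \<in> Ro t \<Longrightarrow> x \<in> Io s"
proof -
  assume st: "s < t" and x: "x \<in> Ro t"
  obtain k :: nat where k: "real k > 1 / (t - s)" using reals_Archimedean2 by blast
  have "1 / real (Suc k) \<le> t - s"
  proof -
    have "1 / (t - s) < real (Suc k)" using k by simp
    then show ?thesis using st by (simp add: field_simps)
  qed
  then have "s \<le> t - 1 / real (Suc k)" by simp
  moreover have "x \<in> Io (t - 1 / real (Suc k))" using x unfolding Ro_def by blast
  ultimately show ?thesis by (rule Io_mono)
qed

lemma sub_inv_01:
  assumes R: "R \<in> sets M" and sub: "\<And>x. T x \<in> R \<Longrightarrow> x \<in> R"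
  shows "measure M R = 0 \<or> measure M R = 1"
proof -
  define Rn where "Rn n = (T ^^ n) -` R" for n
  have Rn_meas: "Rn n \<in> sets M" for n
    using measurable_sets[OF Tn_meas R, of n] SP by (simp add: Rn_def)
  have dec: "decseq Rn"
  proof (rule decseq_SucI)
    fix n show "Rn (Suc n) \<subseteq> Rn n"
      unfolding Rn_def using sub by (auto simp: funpow_swap1)
  qed
  have mR: "measure M (Rn n) = measure M R" for n unfolding Rn_def by (rule inv_pre[OF R])
  define Rinf where "Rinf = (\<Inter>n. Rn n)"
  have "(\<lambda>n. measure M (Rn n)) \<longlonglongrightarrow> measure M Rinf"
    unfolding Rinf_def by (rule finite_Lim_measure_decseq) (auto simp: Rn_meas dec)
  then have mInf: "measure M Rinf = measure M R" using mR by (simp add: LIMSEQ_const_iff)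
  have Rinf_meas: "Rinf \<in> sets M" unfolding Rinf_def using Rn_meas by auto
  have "T -` Rinf \<inter> space M = Rinf"
  proof -
    have "T -` Rinf = (\<Inter>n. Rn (Suc n))" unfolding Rinf_def Rn_def by (auto simp: funpow_swap1)
    also have "\<dots> = Rinf"
    proof
      show "(\<Inter>n. Rn (Suc n)) \<subseteq> Rinf" unfolding Rinf_def
        using dec by (auto simp: decseq_Suc_iff)
      show "Rinf \<subseteq> (\<Inter>n. Rn (Suc n))" unfolding Rinf_def by auto
    qed
    finally show ?thesis using SP by simp
  qed
  then have "measure M Rinf = 0 \<or> measure M Rinf = 1" using ERG Rinf_meas by (simp add: ergodic_def)
  then show ?thesis using mInf by simp
qed

end

lemma le_of_lim2:
  fixes a b c :: real
  assumes "\<And>L::nat. L \<ge> NN \<Longrightarrow> a \<le> b + c / real L"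
  shows "a \<le> b"
proof -
  have "(\<lambda>L. b + c / real L) \<longlonglongrightarrow> b + 0"
    by (intro tendsto_add tendsto_const) (rule lim_const_over_n)
  then have lim: "(\<lambda>L. b + c / real L) \<longlonglongrightarrow> b" by simp
  show ?thesis
    by (rule LIMSEQ_le_const[OF lim]) (use assms in \<open>auto intro!: exI[of _ NN]\<close>)
qed

context ES begin

interpretation prob_space M by (rule PS)

lemma card_words: "card (words n) = m ^ n"
proof -
  have "words n = {w. set w \<subseteq> {1..m} \<and> length w = n}" by (auto simp: words_def strings_over_def)
  then show ?thesis by (simp add: card_lists_length_eq)
qed

lemma Ro_01: "measure M (Ro t) = 0 \<or> measure M (Ro t) = 1"
  by (rule sub_inv_01[OF Ro_meas Ro_T])

lemma H_bound:
  assumes t: "t \<ge> 0" and n: "n \<ge> 1"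
    and d: "1 - measure M {x. muC n x > 2 powr (- t * real n)} \<le> \<delta>"
  shows "H n / real n \<le> t + \<delta> * log 2 (real m) + (2 / ln 2) / real n"
proof -
  define W1 where "W1 = {w\<in>words n. p w > 2 powr (- t * real n)}"
  define W2 where "W2 = {w\<in>words n. \<not> p w > 2 powr (- t * real n)}"
  have fW: "finite W1" "finite W2" by (auto simp: W1_def W2_def finite_words)
  have split: "words n = W1 \<union> W2" "W1 \<inter> W2 = {}" by (auto simp: W1_def W2_def)
  have sumsplit: "(\<Sum>w\<in>words n. g w) = (\<Sum>w\<in>W1. g w) + (\<Sum>w\<in>W2. g w)" for g :: "nat list \<Rightarrow> real"
    unfolding split(1) by (rule sum.union_disjoint) (use fW split in auto)
  have P1le: "(\<Sum>w\<in>W1. p w) \<le> 1"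
  proof -
    have "(\<Sum>w\<in>W1. p w) \<le> (\<Sum>w\<in>words n. p w)"
      using sumsplit[of p] p_nonneg by (simp add: sum_nonneg)
    then show ?thesis using p_sum by simp
  qed
  have G: "{x. muC n x > 2 powr (- t * real n)} \<subseteq> (\<Union>w\<in>W1. C w)"
  proof
    fix x assume "x \<in> {x. muC n x > 2 powr (- t * real n)}"
    then have "prefix_of (om x) n \<in> W1" using prefix_words[of x n] by (simp add: W1_def muC_def)
    moreover have "x \<in> C (prefix_of (om x) n)" using C_iff[OF prefix_words] by simp
    ultimately show "x \<in> (\<Union>w\<in>W1. C w)" by blast
  qed
  have "measure M {x. muC n x > 2 powr (- t * real n)} \<le> measure M (\<Union>w\<in>W1. C w)"
    by (rule finite_measure_mono[OF G]) (use fW in \<open>auto intro!: sets.finite_UN words_C_meas simp: W1_def\<close>)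
  also have "\<dots> \<le> (\<Sum>w\<in>W1. p w)" unfolding p_def
    by (rule finite_measure_subadditive_finite) (use fW in \<open>auto intro: words_C_meas simp: W1_def\<close>)
  finally have "1 - (\<Sum>w\<in>W1. p w) \<le> \<delta>" using d by simp
  moreover have "(\<Sum>w\<in>W1. p w) + (\<Sum>w\<in>W2. p w) = 1" using sumsplit[of p] p_sum by simp
  ultimately have P2le: "(\<Sum>w\<in>W2. p w) \<le> \<delta>" by simp
  have cW1: "real (card W1) \<le> 2 powr (t * real n)"
  proof -
    have "real (card W1) * 2 powr (- t * real n) = (\<Sum>w\<in>W1. 2 powr (- t * real n))" by simp
    also have "\<dots> \<le> (\<Sum>w\<in>W1. p w)" by (intro sum_mono) (auto simp: W1_def)
    also have "\<dots> \<le> 1" by (rule P1le)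
    finally have "real (card W1) * 2 powr (- t * real n) \<le> 1" .
    moreover have "2 powr (- t * real n) = 1 / 2 powr (t * real n)" by (simp add: powr_minus_divide)
    ultimately have "real (card W1) / 2 powr (t * real n) \<le> 1" by simp
    then show ?thesis by (simp add: divide_le_eq)
  qed
  have cW2: "real (card W2) \<le> real m ^ n"
  proof -
    have "card W2 \<le> card (words n)" by (rule card_mono) (auto simp: finite_words W2_def)
    then show ?thesis unfolding card_words by (metis of_nat_le_iff of_nat_power)
  qed
  have m1: "real m \<ge> 1" using m_pos by simp
  have e1: "- (\<Sum>w\<in>W1. p w * log 2 (p w)) \<le> (\<Sum>w\<in>W1. p w) * log 2 (2 powr (t * real n)) + 1 / ln 2"
    by (rule ent_group_bound'[OF fW(1) p_nonneg cW1])
  have e2: "- (\<Sum>w\<in>W2. p w * log 2 (p w)) \<le> (\<Sum>w\<in>W2. p w) * log 2 (real m ^ n) + 1 / ln 2"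
    by (rule ent_group_bound'[OF fW(2) p_nonneg cW2])
  have l1: "(\<Sum>w\<in>W1. p w) * log 2 (2 powr (t * real n)) \<le> t * real n"
  proof -
    have "log 2 (2 powr (t * real n)) = t * real n" by simp
    moreover have "(\<Sum>w\<in>W1. p w) * (t * real n) \<le> 1 * (t * real n)"
      using P1le t by (intro mult_right_mono) auto
    ultimately show ?thesis by simp
  qed
  have l2: "(\<Sum>w\<in>W2. p w) * log 2 (real m ^ n) \<le> \<delta> * (real n * log 2 (real m))"
  proof -
    have "log 2 (real m ^ n) = real n * log 2 (real m)" using m1 by (simp add: log_nat_power)
    moreover have "0 \<le> real n * log 2 (real m)" using m1 by simp
    ultimately show ?thesis using P2le by (simp add: mult_right_mono)
  qed
  have "H n = - (\<Sum>w\<in>W1. p w * log 2 (p w)) - (\<Sum>w\<in>W2. p w * log 2 (p w))"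
    unfolding H_def sumsplit by simp
  also have "\<dots> \<le> t * real n + \<delta> * (real n * log 2 (real m)) + 2 / ln 2"
    using e1 e2 l1 l2 by simp
  finally have Hle: "H n \<le> t * real n + \<delta> * (real n * log 2 (real m)) + 2 / ln 2" .
  have "H n / real n \<le> (t * real n + \<delta> * (real n * log 2 (real m)) + 2 / ln 2) / real n"
    by (rule divide_right_mono[OF Hle]) simp
  also have "\<dots> = t + \<delta> * log 2 (real m) + (2 / ln 2) / real n"
    using n by (simp add: add_divide_distrib)
  finally show ?thesis .
qed

lemma Ro_zero_imp:
  assumes t: "t \<ge> 0" and R0: "measure M (Ro t) = 0"
  shows "hh \<le> t"
proof -
  define G where "G N = {x. \<forall>n\<ge>N. muC n x > 2 powr (- t * real n)}" for N
  have G_meas: "G N \<in> sets M" for N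
  proof -
    have "G N = (\<Inter>n\<in>{N..}. {x. muC n x > 2 powr (- t * real n)})" by (auto simp: G_def)
    also have "\<dots> \<in> sets M" by (intro sets.countable_INT'' UNIV_sets muC_set) auto
    finally show ?thesis .
  qed
  have inc: "incseq G" unfolding incseq_def G_def by auto
  have "AE x in M. x \<notin> Ro t"
    using AE_not_in[of "Ro t"] R0 Ro_meas by (simp add: emeasure_eq_measure null_sets_def)
  then have "AE x in M. x \<in> (\<Union>N. G N)"
  proof (rule AE_mp[OF _ AE_I2], intro impI)
    fix x assume "x \<notin> Ro t"
    then obtain k where k: "x \<notin> Io (t - 1 / real (Suc k))" unfolding Ro_def by blast
    then have "\<not> (\<forall>N. \<exists>n\<ge>N. muC n x \<le> 2 powr (- (t - 1 / real (Suc k)) * real n))"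
      unfolding Io_def by simp
    then obtain N where "\<forall>n\<ge>N. \<not> muC n x \<le> 2 powr (- (t - 1 / real (Suc k)) * real n)"
      by blast
    then have N: "\<forall>n\<ge>N. muC n x > 2 powr (- (t - 1 / real (Suc k)) * real n)"
      by (simp add: not_le)
    have "muC n x > 2 powr (- t * real n)" if "n \<ge> N" for n
    proof -
      have "2 powr (- t * real n) \<le> 2 powr (- (t - 1 / real (Suc k)) * real n)"
        by (intro powr_mono) (auto simp: algebra_simps)
      then show ?thesis using N that by (meson order_le_less_trans)
    qed
    then show "x \<in> (\<Union>N. G N)" by (auto simp: G_def)
  qed
  then have U1: "measure M (\<Union>N. G N) = 1"
    by (subst (asm) AE_in_set_eq_1) (auto intro: G_meas)
  have limG: "(\<lambda>N. measure M (G N)) \<longlonglongrightarrow> 1"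
    using finite_Lim_measure_incseq[of G] G_meas inc U1 by auto
  have bndN: "hh \<le> t + (1 - measure M (G N)) * log 2 (real m)" for N
  proof (rule le_of_lim2[where NN = "max N 1" and c = "2 / ln 2"])
    fix n :: nat assume n: "n \<ge> max N 1"
    have "measure M (G N) \<le> measure M {x. muC n x > 2 powr (- t * real n)}"
      by (rule finite_measure_mono) (use n in \<open>auto simp: G_def intro: muC_set\<close>)
    then have d: "1 - measure M {x. muC n x > 2 powr (- t * real n)} \<le> 1 - measure M (G N)" by simp
    have "hh \<le> H n / real n" using n by (intro hh_le) simp
    also have "\<dots> \<le> t + (1 - measure M (G N)) * log 2 (real m) + (2 / ln 2) / real n"
      by (rule H_bound[OF t _ d]) (use n in simp)
    finally show "hh \<le> t + (1 - measure M (G N)) * log 2 (real m) + 2 / ln 2 / real n" .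
  qed
  have "(\<lambda>N. t + (1 - measure M (G N)) * log 2 (real m)) \<longlonglongrightarrow> t + (1 - 1) * log 2 (real m)"
    by (intro tendsto_intros limG)
  then have "(\<lambda>N. t + (1 - measure M (G N)) * log 2 (real m)) \<longlonglongrightarrow> t" by simp
  then show ?thesis by (rule LIMSEQ_le_const) (use bndN in auto)
qed

lemma Ro_one: "0 \<le> t \<Longrightarrow> t < hh \<Longrightarrow> measure M (Ro t) = 1"
  using Ro_01[of t] Ro_zero_imp[of t] by fastforce

end

context ES begin

interpretation prob_space M by (rule PS)

definition F :: "(nat list \<Rightarrow> bool list) \<Rightarrow> real \<Rightarrow> real \<Rightarrow> nat \<Rightarrow> 'a set" where
  "F Z a b n = {x. real (length (Z (prefix_of (om x) n))) \<le> a * real n \<and> muC n x \<le> 2 powr (- b * real n)}"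

lemma F_meas: "F Z a b n \<in> sets M"
  unfolding F_def muC_def by (rule pref_set_meas)

lemma F_bound:
  assumes a: "a \<ge> 0" and Z: "compression_algorithm m Z"
  shows "measure M (F Z a b n) \<le> 2 * (2 powr (a - b)) ^ n"
proof -
  define Wn where "Wn = {w\<in>words n. real (length (Z w)) \<le> a * real n \<and> p w \<le> 2 powr (- b * real n)}"
  have fW: "finite Wn" by (auto simp: Wn_def finite_words)
  have FU: "F Z a b n = (\<Union>w\<in>Wn. C w)"
    unfolding F_def Wn_def muC_def by (rule pref_set)
  have "measure M (F Z a b n) \<le> (\<Sum>w\<in>Wn. p w)" unfolding FU p_def
    by (rule finite_measure_subadditive_finite) (use fW in \<open>auto intro: words_C_meas simp: Wn_def\<close>)
  also have "\<dots> \<le> (\<Sum>w\<in>Wn. 2 powr (- b * real n))" by (intro sum_mono) (auto simp: Wn_def)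
  also have "\<dots> = real (card Wn) * 2 powr (- b * real n)" by simp
  also have "real (card Wn) \<le> 2 * 2 powr (a * real n)"
  proof -
    define K where "K = nat \<lfloor>a * real n\<rfloor>"
    have "Wn \<subseteq> strings_over m" by (auto simp: Wn_def words_def)
    then have inj: "inj_on Z Wn"
      using Z inj_on_subset unfolding compression_algorithm_def by blast
    have "Z ` Wn \<subseteq> {xs. length xs \<le> K}"
      by (auto simp: Wn_def K_def intro: le_nat_floor)
    then have "card (Z ` Wn) \<le> card {xs :: bool list. length xs \<le> K}"
    proof (rule card_mono[rotated])
      show "finite {xs :: bool list. length xs \<le> K}"
        using finite_lists_length_le[of "UNIV :: bool set" K] by simp
    qed
    also have "\<dots> \<le> 2 ^ (K + 1)" by (rule card_bool_lists_le)
    finally have "card Wn \<le> 2 ^ (K + 1)" using card_image[OF inj] by simp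
    then have "real (card Wn) \<le> 2 * 2 ^ K" by (metis of_nat_le_iff of_nat_numeral of_nat_power power_Suc Suc_eq_plus1)
    also have "(2::real) ^ K = 2 powr (real K)" by (simp add: powr_realpow)
    also have "\<dots> \<le> 2 powr (a * real n)"
      unfolding K_def by (intro powr_mono of_nat_floor) (use a in auto)
    finally show ?thesis by simp
  qed
  then have "real (card Wn) * 2 powr (- b * real n) \<le> 2 * 2 powr (a * real n) * 2 powr (- b * real n)"
    by (intro mult_right_mono) auto
  also have "\<dots> = 2 * (2 powr (a - b)) ^ n"
  proof -
    have "2 powr (a * real n) * 2 powr (- b * real n) = 2 powr ((a - b) * real n)"
      by (simp add: powr_add[symmetric] algebra_simps)
    also have "\<dots> = (2 powr (a - b)) powr (real n)" by (simp add: powr_powr)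
    also have "\<dots> = (2 powr (a - b)) ^ n" by (simp add: powr_realpow)
    finally show ?thesis by simp
  qed
  finally show ?thesis .
qed

lemma BC:
  assumes a: "a \<ge> 0" "a < b" and Z: "compression_algorithm m Z"
  shows "AE x in M. eventually (\<lambda>n. x \<in> space M - F Z a b n) sequentially"
proof (rule borel_cantelli_AE1)
  show "F Z a b n \<in> sets M" for n by (rule F_meas)
  show "emeasure M (F Z a b n) < \<infinity>" for n by (simp add: emeasure_eq_measure)
  have r: "2 powr (a - b) < 1" using powr_less_mono[of "a - b" 0 2] a by simp
  have "summable (\<lambda>n. 2 * (2 powr (a - b)) ^ n)"
    by (intro summable_mult summable_geometric) (use r in simp)
  then show "summable (\<lambda>n. measure M (F Z a b n))"
    by (rule summable_comparison_test') (use F_bound[OF a(1) Z] in simp)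
qed

lemma lower_a:
  assumes a: "0 \<le> a" "a < hh" and Z: "compression_algorithm m Z"
  shows "AE x in M. ereal a \<le> K_Z_point Z m A T x"
proof -
  define b where "b = (a + hh) / 2"
  define t where "t = (b + hh) / 2"
  have ab: "a < b" "b < t" "0 \<le> t" "t < hh" using a by (auto simp: b_def t_def)
  have "AE x in M. x \<in> Ro t"
    using Ro_one[OF ab(3,4)] Ro_meas by (subst AE_in_set_eq_1) auto
  with BC[OF a(1) ab(1) Z]
  show ?thesis
  proof (eventually_elim)
    case (elim x)
    show "ereal a \<le> K_Z_point Z m A T x"
    proof (rule ccontr)
      assume "\<not> ereal a \<le> K_Z_point Z m A T x"
      then have "limsup (\<lambda>n. ereal (real (length (Z (prefix_of (om x) n))) / real n)) < ereal a"
        by (simp add: K_Z_point_def K_Z_def not_le)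
      then have ev: "eventually (\<lambda>n. ereal (real (length (Z (prefix_of (om x) n))) / real n) < ereal a) sequentially"
        by (rule Limsup_lessD)
      have "eventually (\<lambda>n. n \<ge> 1 \<and> ereal (real (length (Z (prefix_of (om x) n))) / real n) < ereal a
          \<and> x \<in> space M - F Z a b n) sequentially"
        using eventually_ge_at_top[of 1] ev elim(1) by eventually_elim simp
      then obtain N where N: "\<And>n. n \<ge> N \<Longrightarrow> n \<ge> 1 \<and> ereal (real (length (Z (prefix_of (om x) n))) / real n) < ereal a
          \<and> x \<in> space M - F Z a b n"
        unfolding eventually_sequentially by blast
      have "x \<in> Io b" using Ro_Io[OF ab(2) elim(2)] .
      then obtain n where n: "n \<ge> N" "muC n x \<le> 2 powr (- b * real n)" unfolding Io_def by blast
      from N[OF n(1)] have n1: "n \<ge> 1" and l: "real (length (Z (prefix_of (om x) n))) / real n < a"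
        and nf: "x \<notin> F Z a b n" by auto
      have "real (length (Z (prefix_of (om x) n))) \<le> a * real n"
        using l n1 by (simp add: divide_less_eq)
      then have "x \<in> F Z a b n" using n(2) by (simp add: F_def)
      then show False using nf by simp
    qed
  qed
qed

lemma lower:
  assumes Z: "compression_algorithm m Z"
  shows "AE x in M. ereal hh \<le> K_Z_point Z m A T x"
proof (cases "hh = 0")
  case True
  show ?thesis
  proof (rule AE_I2)
    fix x
    have "0 \<le> limsup (\<lambda>n. ereal (real (length (Z (prefix_of (om x) n))) / real n))"
      by (rule le_Limsup) auto
    then show "ereal hh \<le> K_Z_point Z m A T x" using True by (simp add: K_Z_point_def K_Z_def zero_ereal_def)
  qed
next
  case False
  then have hp: "hh > 0" using hh_nonneg by simp
  define a where "a k = hh - hh / real (Suc (Suc k))" for k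
  have a_bnd: "0 \<le> a k \<and> a k < hh" for k
  proof -
    have "hh / real (Suc (Suc k)) \<le> hh" using hp by (simp add: divide_le_eq)
    moreover have "hh / real (Suc (Suc k)) > 0" using hp by simp
    ultimately show ?thesis by (simp add: a_def)
  qed
  have "AE x in M. \<forall>k. ereal (a k) \<le> K_Z_point Z m A T x"
    by (subst AE_all_countable) (use a_bnd lower_a[OF _ _ Z] in blast)
  then show ?thesis
  proof (rule AE_mp[OF _ AE_I2], intro impI)
    fix x assume H: "\<forall>k. ereal (a k) \<le> K_Z_point Z m A T x"
    have "(\<lambda>k. hh / real (Suc (Suc k))) \<longlonglongrightarrow> 0"
      using LIMSEQ_Suc[OF LIMSEQ_Suc[OF lim_const_over_n[of hh]]] by simp
    then have "a \<longlonglongrightarrow> hh - 0" unfolding a_def by (intro tendsto_diff tendsto_const)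
    then have "(\<lambda>k. ereal (a k)) \<longlonglongrightarrow> ereal hh" by (intro tendsto_ereal) simp
    then show "ereal hh \<le> K_Z_point Z m A T x"
      by (rule LIMSEQ_le_const2) (use H in auto)
  qed
qed

end

theorem theorem14:
  fixes M :: "'a::metric_space measure" and T :: "'a \<Rightarrow> 'a"
    and m :: nat and A :: "nat \<Rightarrow> 'a set" and Z :: "nat list \<Rightarrow> bool list"
  assumes "compact (UNIV :: 'a set)"
    and "continuous_on UNIV T"
    and "sets M = sets borel"
    and "prob_space M"
    and "invariant_measure M T"
    and "ergodic M T"
    and "measurable_partition M m A"
    and "compression_algorithm m Z"
    and "coarsely_optimal m Z"
  shows "AE x in M. K_Z_point Z m A T x = ereal (metric_entropy M m A T)"
proof -
  have SP: "space M = UNIV" using sets_eq_imp_space_eq[OF assms(3)] by simp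
  interpret ES M T m A
    by (rule ES.intro) (use assms SP in auto)
  have "AE x in M. K_Z_point Z m A T x \<le> ereal hh" by (rule upper[OF assms(9)])
  moreover have "AE x in M. ereal hh \<le> K_Z_point Z m A T x" by (rule lower[OF assms(8)])
  ultimately have "AE x in M. K_Z_point Z m A T x = ereal hh" by eventually_elim (rule antisym)
  then show ?thesis by (simp add: metric_eq)
qed

end
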